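(* Let $\mathbf{p}=(p,s)$ be a finite exponent, let $c=(c_0,c_1)$ be a Whitney parameter and let $k\in\mathbb{Z}$. Then for all $f\in L^0(\mathbb{R}^{1+n}_+)$, \[ \|f\|_{Z^{\mathbf{p}}_c}\simeq_{c,k,\mathbf{p}} \Big(\sum_{Q\in\mathcal{Q}(\mathbb{R}^n)} \ell(Q)^n\big(\ell(Q)^{-s}[|f|^2]^{1/2}_{\overline{Q}^k}\big)^p\Big)^{1/p}, \] where $[|f|^2]^{1/2}_{\overline{Q}^k}:=\big(\iint_{\overline{Q}^k}|f(\tau,\xi)|^2\,\frac{d\tau\,d\xi}{\tau^{1+n}}\big)^{1/2}$ (both sides may be infinite).
   Context: Fix integers $n,N\geq1$; all functions on $\mathbb{R}^{1+n}_+:=(0,\infty)\times\mathbb{R}^n$ are $\mathbb{C}^N$-valued, and $L^0(\mathbb{R}^{1+n}_+)$ denotes measurable functions modulo a.e. equality. A finite exponent is a pair $(p,s)$ with $p\in(0,\infty)$, $s\in\mathbb{R}$; set $i(p,s)=p$, $r(p,s)=s$. A Whitney parameter is a pair $c=(c_0,c_1)\in(0,\infty)\times(3/2,\infty)$; the Whitney region is $\Omega_c(t,x):=(c_1^{-1}t,c_1t)\times B(x,c_0t)$ and $\mathcal{W}_cf(t,x):=\big(|\Omega_c(t,x)|^{-1}\iint_{\Omega_c(t,x)}|f(\tau,\xi)|^2\,d\xi\,d\tau\big)^{1/2}$. With $\kappa^{a}f(t,x):=t^{a}f(t,x)$, define $\|f\|_{Z^{\mathbf{p}}_c}:=\|\mathcal{W}_c(\kappa^{-r(\mathbf{p})}f)\|_{L^{i(\mathbf{p})}(\mathbb{R}^{1+n}_+,\,dx\,dt/t)}$.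 $\mathcal{Q}(\mathbb{R}^n)$ is a system of open dyadic cubes in $\mathbb{R}^n$, $\ell(Q)$ the side length of $Q$, and for $k\in\mathbb{Z}$ the Whitney cube is $\overline{Q}^k:=(2^k\ell(Q),2^{k+1}\ell(Q))\times Q$. *)

theory Defs
  imports "HOL-Analysis.Analysis"
begin

text \<open>Points of the upper half space are pairs (t, x) with t real and x in real^'n;
  functions take values in complex^'m (so N = CARD('m)).\<close>

text \<open>Real power of an extended nonnegative real, for positive exponents:
  infinity stays infinity.\<close>
definition epowr :: "ennreal \<Rightarrow> real \<Rightarrow> ennreal" where
  "epowr x a = (if x = \<infinity> then \<infinity> else ennreal (enn2real x powr a))"

definition upper_half :: "(real \<times> (real^'n)) set" where
  "upper_half = {z. fst z > 0}"

definition whitney_region :: "real \<Rightarrow> real \<Rightarrow> real \<Rightarrow> real^'n \<Rightarrow> (real \<times> (real^'n)) set" where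
  "whitney_region c0 c1 t x = {(\<tau>, \<xi>). t / c1 < \<tau> \<and> \<tau> < c1 * t \<and> \<xi> \<in> ball x (c0 * t)}"

definition whitney_sq :: "real \<Rightarrow> real \<Rightarrow> (real \<times> (real^'n) \<Rightarrow> complex^'m) \<Rightarrow> real \<times> (real^'n) \<Rightarrow> ennreal" where
  "whitney_sq c0 c1 f z =
     (\<integral>\<^sup>+ w \<in> whitney_region c0 c1 (fst z) (snd z). ennreal ((norm (f w))\<^sup>2) \<partial>lebesgue)
       / emeasure lebesgue (whitney_region c0 c1 (fst z) (snd z))"

definition kappa :: "real \<Rightarrow> (real \<times> (real^'n) \<Rightarrow> complex^'m) \<Rightarrow> real \<times> (real^'n) \<Rightarrow> complex^'m" where
  "kappa a f z = of_real (fst z powr a) *\<^sub>R f z"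

text \<open>The Z-norm with exponent (p,s) and Whitney parameter (c0,c1):
  || W_c (kappa^{-s} f) ||_{L^p(dx dt / t)}.\<close>
definition Z_norm :: "real \<Rightarrow> real \<Rightarrow> real \<Rightarrow> real \<Rightarrow> (real \<times> (real^'n) \<Rightarrow> complex^'m) \<Rightarrow> ennreal" where
  "Z_norm p s c0 c1 f =
     epowr (\<integral>\<^sup>+ z. indicator upper_half z *
               epowr (whitney_sq c0 c1 (kappa (- s) f) z) (p / 2) / ennreal (fst z) \<partial>lebesgue) (1 / p)"

text \<open>Open dyadic cubes in R^n, indexed by (j, m): Q = prod_i (2^j m_i, 2^j (m_i+1)),
  side length l(Q) = 2^j.\<close>
definition dyadic_cube :: "int \<Rightarrow> int^'n \<Rightarrow> (real^'n) set" where
  "dyadic_cube j m = {x. \<forall>i. 2 powr j * of_int (m $ i) < x $ i \<and> x $ i < 2 powr j * (of_int (m $ i) + 1)}"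

definition dyadic_len :: "int \<Rightarrow> real" where
  "dyadic_len j = 2 powr j"

definition whitney_cube :: "int \<Rightarrow> int \<Rightarrow> int^'n \<Rightarrow> (real \<times> (real^'n)) set" where
  "whitney_cube k j m = {(\<tau>, \<xi>). 2 powr k * dyadic_len j < \<tau> \<and> \<tau> < 2 powr (k + 1) * dyadic_len j
                                  \<and> \<xi> \<in> dyadic_cube j m}"

text \<open>[|f|^2]_{Qbar^k} (before taking the square root):
  integral over the Whitney cube of |f|^2 d tau d xi / tau^{1+n}.\<close>
definition cube_sq :: "int \<Rightarrow> int \<Rightarrow> int^'n \<Rightarrow> (real \<times> (real^'n) \<Rightarrow> complex^'m) \<Rightarrow> ennreal" where
  "cube_sq k j m f =
     (\<integral>\<^sup>+ w \<in> whitney_cube k j m.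
         ennreal ((norm (f w))\<^sup>2 / fst w ^ (1 + CARD('n))) \<partial>lebesgue)"

definition dyadic_norm :: "real \<Rightarrow> real \<Rightarrow> int \<Rightarrow> (real \<times> (real^'n) \<Rightarrow> complex^'m) \<Rightarrow> ennreal" where
  "dyadic_norm p s k f =
     epowr (\<integral>\<^sup>+ q. ennreal (dyadic_len (fst q) ^ CARD('n) * dyadic_len (fst q) powr (- s * p))
                    * epowr (cube_sq k (fst q) (snd q) f) (p / 2)
            \<partial>(count_space (UNIV :: (int \<times> (int^'n)) set))) (1 / p)"

end

theory Submission
  imports Defs
begin

lemma epowr_mono: assumes "x \<le> y" "a \<ge> 0" shows "epowr x a \<le> epowr y a"
proof (cases "y = \<infinity>")
  case True then show ?thesis by (simp add: epowr_def)
next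
  case False
  then have "x \<noteq> \<infinity>" using assms(1) top.extremum_unique by fastforce
  then show ?thesis using False assms
    by (auto simp: epowr_def intro!: ennreal_leI powr_mono2 enn2real_mono simp: top.not_eq_extremum)
qed

lemma epowr_cmult: assumes "c > 0" "a > 0" shows "epowr (ennreal c * x) a = ennreal (c powr a) * epowr x a"
proof (cases "x = \<infinity>")
  case True then show ?thesis using assms by (simp add: epowr_def ennreal_mult_top)
next
  case False
  then show ?thesis using assms
    by (auto simp: epowr_def enn2real_mult powr_mult ennreal_mult' ennreal_mult_eq_top_iff)
qed

lemma epowr_zero[simp]: "a > 0 \<Longrightarrow> epowr 0 a = 0" by (simp add: epowr_def)

lemma epowr_epowr: assumes "a > 0" "b > 0" shows "epowr (epowr x a) b = epowr x (a*b)"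
  using assms by (auto simp: epowr_def powr_powr)

lemma emeasure_lebesgue_Times:
  fixes A :: "real set" and B :: "(real^'n) set" 
  assumes "A \<in> sets borel" "B \<in> sets borel"
  shows "emeasure lebesgue (A \<times> B) = emeasure lborel A * emeasure lborel B"
proof -
  have "A \<times> B \<in> sets (lborel :: (real \<times> (real^'n)) measure)"
    using assms by (simp flip: lborel_prod)
  then have "emeasure lebesgue (A \<times> B) = emeasure (lborel :: (real \<times> (real^'n)) measure) (A \<times> B)"
    by simp
  also have "\<dots> = emeasure (lborel \<Otimes>\<^sub>M lborel) (A \<times> B)" by (simp add: lborel_prod)
  also have "\<dots> = emeasure lborel A * emeasure lborel B"
    using assms by (intro lborel.emeasure_pair_measure_Times) auto
  finally show ?thesis .
qed

lemma whitney_region_eq: "whitney_region c0 c1 t x = {t/c1<..<c1*t} \<times> ball x (c0*t)"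
  by (auto simp: whitney_region_def)

definition mW :: "real \<Rightarrow> real \<Rightarrow> real \<Rightarrow> nat \<Rightarrow> real" where
  "mW c0 c1 t n = (c1*t - t/c1) * (unit_ball_vol n * (c0*t)^n)"

lemma emeasure_whitney_region:
  fixes x :: "real^'n"
  assumes "t > 0" "c1 > 1" "c0 > 0"
  shows "emeasure lebesgue (whitney_region c0 c1 t x) = ennreal (mW c0 c1 t CARD('n))"
proof -
  have "t/c1 \<le> t" using assms by (simp add: divide_le_eq)
  moreover have "t \<le> c1 * t" using assms by simp
  ultimately have "t/c1 \<le> c1 * t" by linarith
  then show ?thesis
    unfolding whitney_region_eq using assms
    by (subst emeasure_lebesgue_Times) (auto simp: emeasure_ball mW_def ennreal_mult')
qed

lemma mW_pos: "t > 0 \<Longrightarrow> c1 > 1 \<Longrightarrow> c0 > 0 \<Longrightarrow> mW c0 c1 t n > 0"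
proof -
  assume t: "t > 0" and c1: "c1 > 1" and c0: "c0 > 0"
  have "t / c1 < t" using t c1 by (simp add: divide_less_eq)
  moreover have "t < c1 * t" using t c1 by simp
  ultimately have "c1 * t - t / c1 > 0" by linarith
  then show ?thesis unfolding mW_def using t c0 by simp
qed

lemma mW_eq: "mW c0 c1 t n = (c1 - 1/c1) * unit_ball_vol n * c0^n * t^(n+1)"
  by (simp add: mW_def algebra_simps power_mult_distrib)

lemma meas_h:
  fixes f :: "real \<times> (real^'n) \<Rightarrow> complex^'m"
  assumes "f \<in> borel_measurable lebesgue"
  shows "(\<lambda>w. ennreal ((norm (f w))\<^sup>2 / fst w ^ (1 + CARD('n)))) \<in> borel_measurable lebesgue"
proof -
  have "fst \<in> borel_measurable (borel :: (real \<times> (real^'n)) measure)"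
    by (intro borel_measurable_continuous_onI continuous_intros) 
  then have "fst \<in> borel_measurable (lborel :: (real \<times> (real^'n)) measure)"
    by (simp add: measurable_lborel1)
  then have [measurable]: "fst \<in> borel_measurable (lebesgue :: (real \<times> (real^'n)) measure)"
    by (rule measurable_completion)
  show ?thesis using assms by measurable
qed

lemma card_vec_set:
  fixes A :: "'n::finite \<Rightarrow> 'a set"
  assumes "\<And>i. finite (A i)" "\<And>i. card (A i) \<le> K"
  shows "finite {m :: 'a^'n. \<forall>i. m$i \<in> A i} \<and> card {m :: 'a^'n. \<forall>i. m$i \<in> A i} \<le> K ^ CARD('n)"
proof -
  have eq: "{m :: 'a^'n. \<forall>i. m$i \<in> A i} = vec_lambda ` (PiE UNIV A)"
  proof (intro set_eqI iffI)
    fix m :: "'a^'n" assume "m \<in> {m. \<forall>i. m$i \<in> A i}"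
    then have "(\<lambda>i. m$i) \<in> PiE UNIV A" by auto
    moreover have "m = vec_lambda (\<lambda>i. m$i)" by simp
    ultimately show "m \<in> vec_lambda ` (PiE UNIV A)" by blast
  qed auto
  have fin: "finite (PiE UNIV A)" using assms(1) by (simp add: finite_PiE)
  have "card (vec_lambda ` (PiE UNIV A) :: ('a^'n) set) \<le> card (PiE UNIV A)"
    by (rule card_image_le[OF fin])
  also have "\<dots> = (\<Prod>i\<in>UNIV. card (A i))" by (simp add: card_PiE)
  also have "\<dots> \<le> (\<Prod>i\<in>(UNIV::'n set). K)" by (intro prod_mono) (use assms in auto)
  also have "\<dots> = K ^ CARD('n)" by simp
  finally show ?thesis using eq fin by simp
qed

lemma powr_le_max:
  fixes a x b e :: real
  assumes "0 < a" "a \<le> x" "x \<le> b"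
  shows "x powr e \<le> max (a powr e) (b powr e)"
proof (cases "e \<ge> 0")
  case True
  then have "x powr e \<le> b powr e" using assms by (intro powr_mono2) auto
  then show ?thesis by simp
next
  case False
  then have "x powr e \<le> a powr e" using assms by (intro powr_mono2') auto
  then show ?thesis by simp
qed

lemma epowr_sum_le:
  fixes b :: "'i \<Rightarrow> ennreal"
  assumes "finite S" "card S \<le> N" "q > 0"
  shows "epowr (\<Sum>i\<in>S. b i) q \<le> ennreal (real N powr q) * (\<Sum>i\<in>S. epowr (b i) q)"
proof (cases "S = {}")
  case True then show ?thesis using assms by simp
next
  case ne: False
  show ?thesis
  proof (cases "\<exists>i\<in>S. b i = \<infinity>")
    case True
    then obtain i where i: "i \<in> S" "b i = \<infinity>" by blast
    have "N \<ge> 1" using assms ne by (metis One_nat_def Suc_leI card_gt_0_iff le_trans order_refl)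
    then have "real N powr q > 0" by simp
    moreover have "(\<Sum>i\<in>S. epowr (b i) q) = \<infinity>"
    proof -
      have "epowr (b i) q \<le> (\<Sum>i\<in>S. epowr (b i) q)"
        using i assms(1) by (intro member_le_sum) auto
      then show ?thesis using i by (simp add: epowr_def top_unique)
    qed
    ultimately show ?thesis by (simp add: ennreal_mult_top)
  next
    case False
    then have fin: "\<And>i. i \<in> S \<Longrightarrow> b i \<noteq> \<infinity>" by blast
    define r where "r i = enn2real (b i)" for i
    have br: "\<And>i. i \<in> S \<Longrightarrow> b i = ennreal (r i)" using fin by (simp add: r_def ennreal_enn2real_if)
    have r0: "\<And>i. r i \<ge> 0" by (simp add: r_def)
    have sumeq: "(\<Sum>i\<in>S. b i) = ennreal (\<Sum>i\<in>S. r i)"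
      using br r0 by (simp add: sum_ennreal)
    define mx where "mx = Max (r ` S)"
    have mxS: "mx \<in> r ` S" unfolding mx_def using assms(1) ne by simp
    have lemx: "\<And>i. i \<in> S \<Longrightarrow> r i \<le> mx" unfolding mx_def using assms(1) by simp
    have mx0: "mx \<ge> 0" using mxS r0 by auto
    have "(\<Sum>i\<in>S. r i) \<le> (\<Sum>i\<in>S. mx)" by (intro sum_mono lemx)
    also have "\<dots> = real (card S) * mx" by simp
    also have "\<dots> \<le> real N * mx" using assms(2) mx0 by (intro mult_right_mono) auto
    finally have s1: "(\<Sum>i\<in>S. r i) \<le> real N * mx" .
    have "(\<Sum>i\<in>S. r i) powr q \<le> (real N * mx) powr q"
      using s1 r0 by (intro powr_mono2) (auto intro: sum_nonneg less_imp_le assms)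
    also have "\<dots> = real N powr q * mx powr q" using mx0 by (simp add: powr_mult)
    also have "mx powr q \<le> (\<Sum>i\<in>S. r i powr q)"
      using mxS assms(1) by (auto intro!: member_le_sum)
    finally have key: "(\<Sum>i\<in>S. r i) powr q \<le> real N powr q * (\<Sum>i\<in>S. r i powr q)"
      by (simp add: mult_left_mono)
    have lhs: "epowr (\<Sum>i\<in>S. b i) q = ennreal ((\<Sum>i\<in>S. r i) powr q)"
      using sumeq r0 by (simp add: epowr_def sum_nonneg)
    have rhs: "(\<Sum>i\<in>S. epowr (b i) q) = ennreal (\<Sum>i\<in>S. r i powr q)"
      using br r0 by (simp add: epowr_def sum_ennreal)
    show ?thesis unfolding lhs rhs using key
      by (simp add: ennreal_mult'[symmetric] ennreal_leI)
  qed
qed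

lemma Times_sets_lebesgue:
  fixes A :: "real set" and B :: "(real^'n) set"
  assumes "A \<in> sets borel" "B \<in> sets borel"
  shows "A \<times> B \<in> sets (lebesgue :: (real \<times> (real^'n)) measure)"
proof -
  have "A \<times> B \<in> sets (lborel :: (real \<times> (real^'n)) measure)"
    using assms by (simp flip: lborel_prod)
  then show ?thesis by (simp add: sets_completionI_sets)
qed

lemma null_Times:
  fixes A :: "real set" and B :: "(real^'n) set"
  assumes "A \<in> sets borel" "B \<in> sets borel" "emeasure lborel A = 0 \<or> emeasure lborel B = 0"
  shows "A \<times> B \<in> null_sets (lebesgue :: (real \<times> (real^'n)) measure)"
proof (rule null_setsI)
  show "A \<times> B \<in> sets lebesgue" using assms(1,2) by (rule Times_sets_lebesgue)
  show "emeasure lebesgue (A \<times> B) = 0" using assms(3)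
    by (subst emeasure_lebesgue_Times[OF assms(1,2)]) auto
qed

lemma null_cbox_box:
  fixes lo hi :: "real^'n"
  shows "emeasure lborel (cbox lo hi - box lo hi) = 0"
proof -
  have "emeasure lborel (cbox lo hi - box lo hi) = emeasure lborel (cbox lo hi) - emeasure lborel (box lo hi)"
    using emeasure_lborel_box_finite[of lo hi] by (intro emeasure_Diff) (auto simp: box_subset_cbox)
  also have "\<dots> = 0" by (simp add: emeasure_lborel_cbox_eq emeasure_lborel_box_eq)
  finally show ?thesis .
qed

lemma card_floor_ceil: "card {\<lfloor>a::real\<rfloor>..\<lceil>b\<rceil>} \<le> nat \<lceil>b - a\<rceil> + 2"
proof -
  have "\<lceil>b\<rceil> \<le> \<lceil>b - a\<rceil> + \<lceil>a\<rceil>" using ceiling_add_le[of "b-a" a] by simp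
  moreover have "\<lceil>a\<rceil> \<le> \<lfloor>a\<rfloor> + 1" by linarith
  ultimately have "\<lceil>b\<rceil> + 1 - \<lfloor>a\<rfloor> \<le> \<lceil>b - a\<rceil> + 2" by linarith
  then show ?thesis by (simp add: nat_le_iff) linarith
qed

locale WS =
  fixes p s c0 c1 :: real and k :: int
  assumes p_pos: "0 < p" and c0_pos: "0 < c0" and c1_gt: "3/2 < c1"
begin

lemma c1_gt1: "c1 > 1" using c1_gt by simp
lemma c1_pos: "c1 > 0" using c1_gt by simp

definition R :: real where "R = c0 * c1 * 2 powr (k+1)"

lemma R_pos: "R > 0" using c0_pos c1_pos by (simp add: R_def)

definition DD :: "int \<Rightarrow> int^'n \<Rightarrow> (real \<times> (real^'n)) set" where
  "DD j m = {(t,x). 2 powr k * dyadic_len j / c1 < t \<and> t < c1 * (2 powr (k+1) * dyadic_len j)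
     \<and> (\<forall>i. dyadic_len j * of_int (m$i) - R * dyadic_len j < x$i \<and> x$i < dyadic_len j * (of_int (m$i) + 1) + R * dyadic_len j)}"

definition CC :: "int \<Rightarrow> int^'n \<Rightarrow> (real \<times> (real^'n)) set" where
  "CC j m = {(\<tau>,\<xi>). 2 powr k * dyadic_len j \<le> \<tau> \<and> \<tau> \<le> 2 powr (k+1) * dyadic_len j
     \<and> (\<forall>i. dyadic_len j * of_int (m$i) \<le> \<xi>$i \<and> \<xi>$i \<le> dyadic_len j * (of_int (m$i) + 1))}"

lemma cover:
  fixes x \<xi> :: "real^'n"
  assumes t: "t > 0" and w: "(\<tau>,\<xi>) \<in> whitney_region c0 c1 t x"
  shows "\<exists>j m. (\<tau>,\<xi>) \<in> CC j m \<and> (t,x) \<in> DD j m"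
proof -
  from w have tau1: "t/c1 < \<tau>" and tau2: "\<tau> < c1 * t" and dx: "dist x \<xi> < c0 * t"
    by (auto simp: whitney_region_def)
  have tau0: "\<tau> > 0" using tau1 t c1_pos by (smt (verit) divide_pos_pos)
  define L where "L = \<lfloor>log 2 \<tau>\<rfloor>"
  define j where "j = L - k"
  define l where "l = dyadic_len j"
  have l0: "l > 0" by (simp add: l_def dyadic_len_def)
  have e1: "2 powr k * l = 2 powr L" unfolding l_def dyadic_len_def j_def by (simp flip: powr_add)
  have e2: "2 powr (k+1) * l = 2 powr (L+1)" unfolding l_def dyadic_len_def j_def by (simp flip: powr_add add: ac_simps)
  have L1: "2 powr L \<le> \<tau>"
  proof -
    have "2 powr L \<le> 2 powr (log 2 \<tau>)" unfolding L_def by (intro powr_mono) auto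
    then show ?thesis using tau0 by simp
  qed
  have L2: "\<tau> < 2 powr (L+1)"
  proof -
    have "log 2 \<tau> < L + 1" unfolding L_def by linarith
    then have "2 powr (log 2 \<tau>) < 2 powr (L+1)" by (intro powr_less_mono) auto
    then show ?thesis using tau0 by simp
  qed
  define m :: "int^'n" where "m = (\<chi> i. \<lfloor>\<xi>$i / l\<rfloor>)"
  have m1: "l * of_int (m$i) \<le> \<xi>$i" for i
  proof -
    have "of_int \<lfloor>\<xi>$i / l\<rfloor> \<le> \<xi>$i / l" by linarith
    then have "l * of_int \<lfloor>\<xi>$i / l\<rfloor> \<le> l * (\<xi>$i / l)" using l0 by (intro mult_left_mono) auto
    then show ?thesis using l0 by (simp add: m_def)
  qed
  have m2: "\<xi>$i \<le> l * (of_int (m$i) + 1)" for i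
  proof -
    have "\<xi>$i / l \<le> of_int \<lfloor>\<xi>$i / l\<rfloor> + 1" by linarith
    then have "l * (\<xi>$i / l) \<le> l * (of_int \<lfloor>\<xi>$i / l\<rfloor> + 1)" using l0 by (intro mult_left_mono) auto
    then show ?thesis using l0 by (simp add: m_def)
  qed
  have inCC: "(\<tau>,\<xi>) \<in> CC j m"
    unfolding CC_def using e1 e2 L1 L2 m1 m2 by (auto simp: l_def)
  have Rl: "R * l = c0 * c1 * 2 powr (L+1)" unfolding R_def using e2 by (simp add: algebra_simps)
  have d1: "2 powr k * l / c1 < t"
    using e1 L1 tau2 c1_pos by (simp add: divide_less_eq mult.commute)
  have d2: "t < c1 * (2 powr (k+1) * l)"
    using e2 L2 tau1 c1_pos by (smt (verit, best) divide_less_eq mult.commute mult_less_cancel_left_pos)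
  have ct: "c0 * t < R * l"
  proof -
    have "c0 * t < c0 * (c1 * \<tau>)" using tau1 c0_pos c1_pos by (simp add: divide_less_eq mult.commute)
    also have "\<dots> \<le> c0 * c1 * 2 powr (L+1)" using L2 c0_pos c1_pos by simp
    finally show ?thesis using Rl by simp
  qed
  have xi: "\<bar>x$i - \<xi>$i\<bar> < R * l" for i
  proof -
    have "\<bar>x$i - \<xi>$i\<bar> = \<bar>(x - \<xi>)$i\<bar>" by simp
    also have "\<dots> \<le> norm (x - \<xi>)" by (rule component_le_norm_cart)
    also have "\<dots> < c0 * t" using dx by (simp add: dist_norm)
    finally show ?thesis using ct by simp
  qed
  have inDD: "(t,x) \<in> DD j m"
    unfolding DD_def using d1 d2 xi m1 m2 by (auto simp: l_def abs_less_iff) (smt (verit) m1 m2 xi abs_less_iff l_def)+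
  show ?thesis using inCC inDD by blast
qed

end

context WS begin

definition NJ :: nat where "NJ = nat \<lceil>log 2 (2 * c1^2)\<rceil> + 2"
definition NR :: nat where "NR = nat \<lceil>2 * R + 1\<rceil> + 2"
definition Ncov :: nat where "Ncov = NJ * NR ^ CARD('n)"

lemma S_finite_card:
  fixes x :: "real^'n"
  assumes t: "t > 0"
  shows "finite {(j,m). (t,x) \<in> DD j m} \<and> card {(j,m). (t,x) \<in> DD j m} \<le> Ncov TYPE('n)"
proof -
  define lo where "lo = t / (c1 * 2 powr (k+1))"
  define hi where "hi = c1 * t / 2 powr k"
  have lo0: "lo > 0" and hi0: "hi > 0" using t c1_pos by (auto simp: lo_def hi_def)
  define JJ where "JJ = {\<lfloor>log 2 lo\<rfloor>..\<lceil>log 2 hi\<rceil>}"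
  define MM where "MM j = {m :: int^'n. \<forall>i. m$i \<in> {\<lfloor>x$i / dyadic_len j - 1 - R\<rfloor>..\<lceil>x$i / dyadic_len j - 1 - R + (2*R+1)\<rceil>}}" for j
  have sub: "{(j,m). (t,x) \<in> DD j m} \<subseteq> Sigma JJ MM"
  proof (intro subsetI)
    fix z assume "z \<in> {(j,m). (t,x) \<in> DD j m}"
    then obtain j and m :: "int^'n" where z: "z = (j,m)" and jm: "(t,x) \<in> DD j m" by blast
    define l where "l = dyadic_len j"
    have l0: "l > 0" by (simp add: l_def dyadic_len_def)
    have "lo < l"
    proof -
      have "t < c1 * (2 powr (k+1) * l)" using jm by (simp add: DD_def l_def)
      then show ?thesis unfolding lo_def using c1_pos by (simp add: divide_less_eq mult_ac)
    qed
    then have "log 2 lo < log 2 l" using lo0 by simp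
    then have j1: "\<lfloor>log 2 lo\<rfloor> \<le> j" by (simp add: l_def dyadic_len_def; linarith)
    have "l < hi"
    proof -
      have "2 powr k * l / c1 < t" using jm by (simp add: DD_def l_def)
      then show ?thesis unfolding hi_def using c1_pos by (simp add: less_divide_eq divide_less_eq mult_ac)
    qed
    then have "log 2 l < log 2 hi" using l0 by simp
    then have j2: "j \<le> \<lceil>log 2 hi\<rceil>" by (simp add: l_def dyadic_len_def; linarith)
    have mi: "m$i \<in> {\<lfloor>x$i / l - 1 - R\<rfloor>..\<lceil>x$i / l - 1 - R + (2*R+1)\<rceil>}" for i
    proof -
      have a: "l * of_int (m$i) - R * l < x$i" and b: "x$i < l * (of_int (m$i) + 1) + R * l"
        using jm by (auto simp: DD_def l_def)
      from a have "of_int (m$i) - R < x$i / l" using l0 by (simp add: less_divide_eq algebra_simps)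
      then have "m$i \<le> \<lceil>x$i / l - 1 - R + (2*R+1)\<rceil>" by linarith
      moreover have "x$i / l < of_int (m$i) + 1 + R" using b l0 by (simp add: divide_less_eq algebra_simps)
      then have "\<lfloor>x$i / l - 1 - R\<rfloor> \<le> m$i" by linarith
      ultimately show ?thesis by simp
    qed
    show "z \<in> Sigma JJ MM" using z j1 j2 mi by (simp add: JJ_def MM_def l_def)
  qed
  have cMM: "finite (MM j) \<and> card (MM j) \<le> NR ^ CARD('n)" for j
    unfolding MM_def
  proof (rule card_vec_set)
    fix i
    show "card {\<lfloor>x$i / dyadic_len j - 1 - R\<rfloor>..\<lceil>x$i / dyadic_len j - 1 - R + (2*R+1)\<rceil>} \<le> NR"
      using card_floor_ceil[of "x$i / dyadic_len j - 1 - R" "x$i / dyadic_len j - 1 - R + (2*R+1)"]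
      by (simp add: NR_def)
  qed simp
  have hilo: "log 2 hi - log 2 lo = log 2 (2 * c1^2)"
  proof -
    have "log 2 hi - log 2 lo = log 2 (hi / lo)" using lo0 hi0 by (simp add: log_divide)
    moreover have "hi / lo = 2 * c1^2"
      unfolding hi_def lo_def using t c1_pos
      by (simp add: powr_add field_simps power2_eq_square)
    ultimately show ?thesis by simp
  qed
  have cJJ: "card JJ \<le> NJ"
    unfolding JJ_def NJ_def using card_floor_ceil[of "log 2 lo" "log 2 hi"] hilo by simp
  have finS: "finite (Sigma JJ MM)" using cMM by (auto simp: JJ_def)
  have "card (Sigma JJ MM) = (\<Sum>j\<in>JJ. card (MM j))" using cMM by (simp add: JJ_def card_SigmaI)
  also have "\<dots> \<le> (\<Sum>j\<in>JJ. NR ^ CARD('n))" using cMM by (intro sum_mono) auto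
  also have "\<dots> = card JJ * NR ^ CARD('n)" by simp
  also have "\<dots> \<le> Ncov TYPE('n)" unfolding Ncov_def using cJJ by simp
  finally have "card (Sigma JJ MM) \<le> Ncov TYPE('n)" .
  then show ?thesis using sub finS by (meson card_mono finite_subset le_trans)
qed

lemma CC_ae:
  fixes f :: "real \<times> (real^'n) \<Rightarrow> complex^'m"
  shows "(\<integral>\<^sup>+ w. indicator (CC j m) w * ennreal ((norm (f w))\<^sup>2 / fst w ^ (1 + CARD('n))) \<partial>lebesgue) = cube_sq k j m f"
proof -
  define l where "l = dyadic_len j"
  define a where "a = 2 powr k * l"
  define b where "b = 2 powr (k+1) * l"
  define lo :: "real^'n" where "lo = (\<chi> i. l * of_int (m$i))"
  define hi :: "real^'n" where "hi = (\<chi> i. l * (of_int (m$i) + 1))"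
  have CCeq: "CC j m = {a..b} \<times> cbox lo hi"
    by (auto simp: CC_def a_def b_def lo_def hi_def l_def mem_box_cart)
  have WCeq: "whitney_cube k j m = {a<..<b} \<times> box lo hi"
    by (auto simp: whitney_cube_def dyadic_cube_def dyadic_len_def a_def b_def lo_def hi_def l_def mem_box_cart)
  define N where "N = ({a, b} \<times> (UNIV :: (real^'n) set)) \<union> (UNIV \<times> (cbox lo hi - box lo hi))"
  have N: "N \<in> null_sets lebesgue"
    unfolding N_def
    by (intro null_sets.Un null_Times) (auto simp: null_cbox_box emeasure_lborel_countable)
  have "AE w in lebesgue. w \<notin> N" using N by (rule AE_not_in)
  then have "AE w in lebesgue. indicator (CC j m) w * ennreal ((norm (f w))\<^sup>2 / fst w ^ (1 + CARD('n)))
     = ennreal ((norm (f w))\<^sup>2 / fst w ^ (1 + CARD('n))) * indicator (whitney_cube k j m) w"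
  proof (rule AE_mp, intro AE_I2 impI)
    fix w :: "real \<times> (real^'n)" assume "w \<notin> N"
    then have "w \<in> CC j m \<longleftrightarrow> w \<in> whitney_cube k j m"
      unfolding CCeq WCeq N_def by (cases w) (auto simp: mem_box_cart, (meson less_imp_le)+)
    then show "indicator (CC j m) w * ennreal ((norm (f w))\<^sup>2 / fst w ^ (1 + CARD('n)))
     = ennreal ((norm (f w))\<^sup>2 / fst w ^ (1 + CARD('n))) * indicator (whitney_cube k j m) w"
      by (simp add: indicator_def)
  qed
  then show ?thesis unfolding cube_sq_def by (rule nn_integral_cong_AE)
qed

end

context WS begin

definition kap :: "nat \<Rightarrow> real" where "kap n = (c1 - 1/c1) * unit_ball_vol n * c0^n"
definition Mk :: real where "Mk = max ((2 powr k) powr (-2 * s)) ((2 powr (k+1)) powr (-2 * s))"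
definition K2 :: "nat \<Rightarrow> real" where "K2 n = Mk * c1^(n+1) / kap n"

lemma kap_pos: "kap n > 0"
proof -
  have "c1 - 1/c1 > 0" using c1_gt1 by (simp add: field_simps) (smt (verit) c1_gt1 mult_less_cancel_right1)
  then show ?thesis unfolding kap_def using c0_pos by simp
qed

lemma Mk_pos: "Mk > 0" unfolding Mk_def by (simp add: max_def)
lemma K2_pos: "K2 n > 0" unfolding K2_def using Mk_pos kap_pos c1_pos by simp

lemma mW_kap: "mW c0 c1 t n = kap n * t^(n+1)"
  by (simp add: mW_eq kap_def)

lemma U4:
  fixes l \<tau> t :: real
  assumes l: "l > 0" and a: "2 powr k * l \<le> \<tau>" and b: "\<tau> \<le> 2 powr (k+1) * l"
    and t: "t > 0" and tc: "\<tau> < c1 * t"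
  shows "\<tau> powr (-2 * s) \<le> K2 n * l powr (-2 * s) * mW c0 c1 t n / \<tau>^(n+1)"
proof -
  have tau0: "\<tau> > 0" using a l by (smt (verit) mult_pos_pos powr_gt_zero)
  have "\<tau> powr (-2 * s) = (\<tau>/l) powr (-2 * s) * l powr (-2 * s)"
    using l by (simp add: powr_divide)
  also have "(\<tau>/l) powr (-2 * s) \<le> Mk"
    unfolding Mk_def using a b l by (intro powr_le_max) (auto simp: field_simps)
  finally have 1: "\<tau> powr (-2 * s) \<le> Mk * l powr (-2 * s)"
    by (simp add: mult_right_mono)
  have "\<tau>^(n+1) \<le> (c1*t)^(n+1)" using tc tau0 by (intro power_mono) auto
  then have 2: "1 \<le> (c1*t)^(n+1) / \<tau>^(n+1)" using tau0 by simp
  have "Mk * l powr (-2 * s) \<le> Mk * l powr (-2 * s) * ((c1*t)^(n+1) / \<tau>^(n+1))"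
  proof -
    have "Mk * l powr (-2 * s) * 1 \<le> Mk * l powr (-2 * s) * ((c1*t)^(n+1) / \<tau>^(n+1))"
      by (rule mult_left_mono[OF 2]) (use Mk_pos in simp)
    then show ?thesis by simp
  qed
  also have "\<dots> = K2 n * l powr (-2 * s) * mW c0 c1 t n / \<tau>^(n+1)"
    unfolding K2_def mW_kap using kap_pos[of n] by (simp add: field_simps power_mult_distrib)
  finally show ?thesis using 1 by simp
qed

lemma CC_sets: "CC j m \<in> sets (lebesgue :: (real \<times> (real^'n)) measure)"
proof -
  define l where "l = dyadic_len j"
  have "CC j m = {2 powr k * l..2 powr (k+1) * l} \<times> cbox (\<chi> i. l * of_int (m$i)) ((\<chi> i. l * (of_int (m$i) + 1)) :: real^'n)"
    by (auto simp: CC_def l_def mem_box_cart)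
  then show ?thesis by (simp add: Times_sets_lebesgue)
qed

lemma norm_kappa_sq:
  assumes "fst w > 0"
  shows "(norm (kappa (-s) f w))\<^sup>2 = fst w powr (-2 * s) * (norm (f w))\<^sup>2"
proof -
  have "(norm (kappa (-s) f w))\<^sup>2 = (fst w powr (-s))^2 * (norm (f w))\<^sup>2"
    unfolding kappa_def by (simp add: power_mult_distrib)
  also have "(fst w powr (-s))^2 = fst w powr (-2 * s)"
    using assms by (simp add: power2_eq_square flip: powr_add)
  finally show ?thesis .
qed

lemma V_upper:
  fixes f :: "real \<times> (real^'n) \<Rightarrow> complex^'m" and x :: "real^'n"
  assumes fm: "f \<in> borel_measurable lebesgue" and t: "t > 0"
  shows "whitney_sq c0 c1 (kappa (-s) f) (t,x) \<le>
    (\<Sum>q\<in>{(j,m). (t,x) \<in> DD j m}. ennreal (K2 CARD('n) * dyadic_len (fst q) powr (-2 * s)) * cube_sq k (fst q) (snd q) f)"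
proof -
  define n where "n = CARD('n)"
  define S where "S = {(j,m). (t,x) \<in> DD j m}"
  define h where "h w = ennreal ((norm (f w))\<^sup>2 / fst w ^ (1 + CARD('n)))" for w
  define \<Omega> where "\<Omega> = whitney_region c0 c1 t x"
  define \<mu> where "\<mu> = mW c0 c1 t n"
  define a where "a q = K2 n * dyadic_len (fst q) powr (-2 * s)" for q :: "int \<times> (int^'n)"
  have a0: "a q > 0" for q unfolding a_def using K2_pos[of n] by (simp add: dyadic_len_def)
  have mu0: "\<mu> > 0" unfolding \<mu>_def using t c1_gt1 c0_pos by (rule mW_pos)
  have finS: "finite S" unfolding S_def using S_finite_card[OF t] by blast
  have hm: "h \<in> borel_measurable lebesgue" unfolding h_def using fm by (rule meas_h)
  have pw: "ennreal ((norm (kappa (-s) f w))\<^sup>2) * indicator \<Omega> w \<le>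
      (\<Sum>q\<in>S. ennreal (a q * \<mu>) * (indicator (CC (fst q) (snd q)) w * h w))" for w
  proof (cases "w \<in> \<Omega>")
    case False then show ?thesis by simp
  next
    case True
    obtain \<tau> \<xi> where w: "w = (\<tau>,\<xi>)" by (cases w)
    from cover[OF t True[unfolded \<Omega>_def w]] obtain j m where
      cc: "(\<tau>,\<xi>) \<in> CC j m" and dd: "(t,x) \<in> DD j m" by blast
    have jmS: "(j,m) \<in> S" using dd by (simp add: S_def)
    from True have tc: "\<tau> < c1 * t" and tt: "t/c1 < \<tau>" by (auto simp: \<Omega>_def w whitney_region_def)
    have tau0: "\<tau> > 0" using tt t c1_pos by (smt (verit) divide_pos_pos)
    have l0: "dyadic_len j > 0" by (simp add: dyadic_len_def)
    have ab: "2 powr k * dyadic_len j \<le> \<tau>" "\<tau> \<le> 2 powr (k+1) * dyadic_len j" using cc by (auto simp: CC_def)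
    have key: "\<tau> powr (-2 * s) \<le> a (j,m) * \<mu> / \<tau>^(n+1)"
      unfolding \<mu>_def a_def by (simp only: fst_conv) (rule U4[OF l0 ab t tc])
    have "(norm (kappa (-s) f w))\<^sup>2 = \<tau> powr (-2 * s) * (norm (f w))\<^sup>2"
      using norm_kappa_sq[of w f] tau0 w by simp
    also have "\<dots> \<le> (a (j,m) * \<mu> / \<tau>^(n+1)) * (norm (f w))\<^sup>2"
      using key by (intro mult_right_mono) auto
    also have "\<dots> = (a (j,m) * \<mu>) * ((norm (f w))\<^sup>2 / fst w ^ (1 + CARD('n)))"
      by (simp add: w n_def)
    finally have r: "(norm (kappa (-s) f w))\<^sup>2 \<le> (a (j,m) * \<mu>) * ((norm (f w))\<^sup>2 / fst w ^ (1 + CARD('n)))" .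
    have nn: "a (j,m) * \<mu> \<ge> 0" using a0[of "(j,m)"] mu0 by simp
    have "ennreal ((norm (kappa (-s) f w))\<^sup>2) * indicator \<Omega> w = ennreal ((norm (kappa (-s) f w))\<^sup>2)"
      using True by simp
    also have "\<dots> \<le> ennreal (a (j,m) * \<mu>) * (indicator (CC j m) w * h w)"
      using r nn cc w unfolding h_def by (simp add: ennreal_mult'[symmetric] ennreal_leI)
    also have "\<dots> \<le> (\<Sum>q\<in>S. ennreal (a q * \<mu>) * (indicator (CC (fst q) (snd q)) w * h w))"
      using member_le_sum[OF jmS, of "\<lambda>q. ennreal (a q * \<mu>) * (indicator (CC (fst q) (snd q)) w * h w)"] finS
      by simp
    finally show ?thesis .
  qed
  have mq: "(\<lambda>w. ennreal (a q * \<mu>) * (indicator (CC (fst q) (snd q)) w * h w)) \<in> borel_measurable lebesgue" for q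
    by (intro borel_measurable_times_ennreal borel_measurable_const borel_measurable_indicator CC_sets hm)
  have "(\<integral>\<^sup>+ w \<in> \<Omega>. ennreal ((norm (kappa (-s) f w))\<^sup>2) \<partial>lebesgue)
     \<le> (\<integral>\<^sup>+ w. (\<Sum>q\<in>S. ennreal (a q * \<mu>) * (indicator (CC (fst q) (snd q)) w * h w)) \<partial>lebesgue)"
    by (intro nn_integral_mono pw)
  also have "\<dots> = (\<Sum>q\<in>S. \<integral>\<^sup>+ w. ennreal (a q * \<mu>) * (indicator (CC (fst q) (snd q)) w * h w) \<partial>lebesgue)"
    by (rule nn_integral_sum) (rule mq)
  also have "\<dots> = (\<Sum>q\<in>S. ennreal (a q) * cube_sq k (fst q) (snd q) f * ennreal \<mu>)"
  proof (rule sum.cong[OF refl])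
    fix q :: "int \<times> (int^'n)"
    have "(\<integral>\<^sup>+ w. ennreal (a q * \<mu>) * (indicator (CC (fst q) (snd q)) w * h w) \<partial>lebesgue)
      = ennreal (a q * \<mu>) * (\<integral>\<^sup>+ w. indicator (CC (fst q) (snd q)) w * h w \<partial>lebesgue)"
      by (intro nn_integral_cmult) (intro borel_measurable_times_ennreal borel_measurable_indicator CC_sets hm)
    also have "(\<integral>\<^sup>+ w. indicator (CC (fst q) (snd q)) w * h w \<partial>lebesgue) = cube_sq k (fst q) (snd q) f"
      unfolding h_def by (rule CC_ae)
    finally show "(\<integral>\<^sup>+ w. ennreal (a q * \<mu>) * (indicator (CC (fst q) (snd q)) w * h w) \<partial>lebesgue)
      = ennreal (a q) * cube_sq k (fst q) (snd q) f * ennreal \<mu>"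
      using a0[of q] mu0 by (simp add: ennreal_mult' mult_ac)
  qed
  also have "\<dots> = (\<Sum>q\<in>S. ennreal (a q) * cube_sq k (fst q) (snd q) f) * ennreal \<mu>"
    by (rule sum_distrib_right[symmetric])
  finally have I: "(\<integral>\<^sup>+ w \<in> \<Omega>. ennreal ((norm (kappa (-s) f w))\<^sup>2) \<partial>lebesgue)
      \<le> (\<Sum>q\<in>S. ennreal (a q) * cube_sq k (fst q) (snd q) f) * ennreal \<mu>" .
  have em: "emeasure lebesgue \<Omega> = ennreal \<mu>"
    unfolding \<Omega>_def \<mu>_def n_def by (rule emeasure_whitney_region[OF t c1_gt1 c0_pos])
  have "whitney_sq c0 c1 (kappa (-s) f) (t,x) = (\<integral>\<^sup>+ w \<in> \<Omega>. ennreal ((norm (kappa (-s) f w))\<^sup>2) \<partial>lebesgue) / ennreal \<mu>"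
    unfolding whitney_sq_def em[symmetric] \<Omega>_def by simp
  also have "\<dots> \<le> (\<Sum>q\<in>S. ennreal (a q) * cube_sq k (fst q) (snd q) f) * ennreal \<mu> / ennreal \<mu>"
    by (rule divide_right_mono_ennreal[OF I])
  also have "\<dots> = (\<Sum>q\<in>S. ennreal (a q) * cube_sq k (fst q) (snd q) f)"
    using mu0 by (intro ennreal_mult_divide_eq) auto
  finally show ?thesis unfolding S_def n_def a_def .
qed

end

lemma fst_meas[measurable]: "fst \<in> borel_measurable (lebesgue :: (real \<times> (real^'n)) measure)"
proof -
  have "fst \<in> borel_measurable (borel :: (real \<times> (real^'n)) measure)"
    by (intro borel_measurable_continuous_onI continuous_intros) 
  then have "fst \<in> borel_measurable (lborel :: (real \<times> (real^'n)) measure)"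
    by (simp add: measurable_lborel1)
  then show ?thesis by (rule measurable_completion)
qed

lemma box_measure_cart:
  fixes lo hi :: "real^'n"
  assumes "\<And>i. lo$i \<le> hi$i"
  shows "emeasure lborel (box lo hi) = ennreal (\<Prod>i\<in>UNIV. hi$i - lo$i)"
proof -
  have "emeasure lborel (box lo hi) = emeasure lborel (cbox lo hi)"
    by (simp add: emeasure_lborel_box_eq emeasure_lborel_cbox_eq)
  also have "\<dots> = ennreal (measure lborel (cbox lo hi))"
    using emeasure_lborel_cbox_finite[of lo hi] by (simp add: emeasure_eq_ennreal_measure)
  also have "measure lborel (cbox lo hi) = (\<Prod>i\<in>UNIV. hi$i - lo$i)"
    using assms by (intro content_cbox_cart) (auto simp: interval_eq_empty_cart not_less)
  finally show ?thesis .
qed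

context WS begin

definition K4 :: "nat \<Rightarrow> real" where "K4 n = (2 * c1^2 - 1) * (1 + 2*R)^n"

lemma DD_eq: "DD j m = {2 powr k * dyadic_len j / c1 <..< c1 * (2 powr (k+1) * dyadic_len j)} \<times>
    box (\<chi> i. dyadic_len j * of_int (m$i) - R * dyadic_len j) ((\<chi> i. dyadic_len j * (of_int (m$i) + 1) + R * dyadic_len j) :: real^'n)"
  by (auto simp: DD_def mem_box_cart)

lemma DD_sets: "DD j m \<in> sets (lebesgue :: (real \<times> (real^'n)) measure)"
  unfolding DD_eq by (simp add: Times_sets_lebesgue)

lemma U7: "(\<integral>\<^sup>+ z. indicator (DD j m) z / ennreal (fst z) \<partial>(lebesgue :: (real \<times> (real^'n)) measure))
     \<le> ennreal (K4 CARD('n) * dyadic_len j ^ CARD('n))"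
proof -
  define l where "l = dyadic_len j"
  have l0: "l > 0" by (simp add: l_def dyadic_len_def)
  define A where "A = 2 powr k * l / c1"
  define B where "B = c1 * (2 powr (k+1) * l)"
  have A0: "A > 0" using l0 c1_pos by (simp add: A_def)
  have AB: "B - A = A * (2 * c1^2 - 1)"
    unfolding A_def B_def using c1_pos by (simp add: powr_add field_simps power2_eq_square)
  have pw: "indicator (DD j m) z / ennreal (fst z) \<le> ennreal (1/A) * indicator (DD j m) z" for z :: "real \<times> (real^'n)"
  proof (cases "z \<in> DD j m")
    case True
    then have "A < fst z" by (cases z) (auto simp: DD_def A_def l_def)
    then have t0: "fst z > 0" using A0 by simp
    have "1 / ennreal (fst z) = ennreal (1 / fst z)"
      using divide_ennreal[of 1 "fst z"] t0 by simp
    also have "\<dots> \<le> ennreal (1/A)"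
      using \<open>A < fst z\<close> A0 by (intro ennreal_leI) (simp add: frac_le)
    finally have "1 / ennreal (fst z) \<le> ennreal (1/A)" .
    then show ?thesis using True by simp
  qed simp
  have "(\<integral>\<^sup>+ z. indicator (DD j m) z / ennreal (fst z) \<partial>(lebesgue :: (real \<times> (real^'n)) measure))
      \<le> (\<integral>\<^sup>+ z. ennreal (1/A) * indicator (DD j m) z \<partial>lebesgue)"
    by (intro nn_integral_mono pw)
  also have "\<dots> = ennreal (1/A) * emeasure lebesgue (DD j m :: (real \<times> (real^'n)) set)"
    by (rule nn_integral_cmult_indicator[OF DD_sets])
  also have "emeasure lebesgue (DD j m :: (real \<times> (real^'n)) set) = ennreal (B - A) * ennreal ((l * (1 + 2*R))^CARD('n))"
  proof -
    have "1 \<le> c1^2" using c1_gt1 by (intro one_le_power) simp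
    then have "0 \<le> A * (2 * c1^2 - 1)" using A0 by simp
    then have "A \<le> B" using AB by simp
    have "emeasure lebesgue (DD j m :: (real \<times> (real^'n)) set)
      = emeasure lborel {A<..<B} * emeasure lborel (box (\<chi> i. l * of_int (m$i) - R * l) ((\<chi> i. l * (of_int (m$i) + 1) + R * l) :: real^'n))"
      unfolding DD_eq by (subst emeasure_lebesgue_Times) (auto simp: A_def B_def l_def)
    also have "emeasure lborel (box (\<chi> i. l * of_int (m$i) - R * l) ((\<chi> i. l * (of_int (m$i) + 1) + R * l) :: real^'n))
       = ennreal (\<Prod>i\<in>(UNIV::'n set). l * (1 + 2*R))"
      using l0 R_pos by (subst box_measure_cart) (auto simp: algebra_simps)
    finally show ?thesis using \<open>A \<le> B\<close> by simp
  qed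
  also have "ennreal (1/A) * (ennreal (B - A) * ennreal ((l * (1 + 2*R))^CARD('n))) = ennreal (K4 CARD('n) * l ^ CARD('n))"
  proof -
    have "1 \<le> c1^2" using c1_gt1 by (intro one_le_power) simp
    then have nn: "0 \<le> A * (2 * c1^2 - 1)" using A0 by simp
    have nn2: "0 \<le> (l * (1 + 2*R))^CARD('n)" using l0 R_pos by simp
    have "ennreal (1/A) * (ennreal (B - A) * ennreal ((l * (1 + 2*R))^CARD('n)))
       = ennreal (1/A * ((A * (2 * c1^2 - 1)) * (l * (1 + 2*R))^CARD('n)))"
      unfolding AB
      by (subst ennreal_mult[symmetric, OF nn nn2], subst ennreal_mult[symmetric]) (use A0 nn nn2 in auto)
    also have "1/A * ((A * (2 * c1^2 - 1)) * (l * (1 + 2*R))^CARD('n)) = K4 CARD('n) * l ^ CARD('n)"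
      unfolding K4_def using A0 by (simp add: power_mult_distrib)
    finally show ?thesis .
  qed
  finally show ?thesis by (simp add: l_def)
qed

end

context WS begin

definition Y :: "'n itself \<Rightarrow> (real \<times> (real^'n) \<Rightarrow> complex^'m) \<Rightarrow> int \<times> (int^'n) \<Rightarrow> ennreal" where
  "Y T f q = ennreal (real (Ncov TYPE('n)) powr (p/2)) * ennreal ((K2 CARD('n) * dyadic_len (fst q) powr (-2 * s)) powr (p/2))
     * epowr (cube_sq k (fst q) (snd q) f) (p/2)"

lemma Z_pw:
  fixes f :: "real \<times> (real^'n) \<Rightarrow> complex^'m" and z :: "real \<times> (real^'n)"
  assumes fm: "f \<in> borel_measurable lebesgue"
  shows "indicator upper_half z * epowr (whitney_sq c0 c1 (kappa (- s) f) z) (p/2) / ennreal (fst z)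
    \<le> (\<integral>\<^sup>+ q. indicator (DD (fst q) (snd q)) z * Y TYPE('n) f q / ennreal (fst z) \<partial>count_space UNIV)"
proof (cases "fst z > 0")
  case False
  then have "indicator upper_half z = (0::ennreal)" by (simp add: upper_half_def)
  then show ?thesis by simp
next
  case True
  obtain t x where z: "z = (t,x)" by (cases z)
  have t: "t > 0" using True z by simp
  define S where "S = {(j,m). (t,x) \<in> DD j m}"
  have finS: "finite S" and cardS: "card S \<le> Ncov TYPE('n)" unfolding S_def using S_finite_card[OF t] by auto
  define a where "a q = K2 CARD('n) * dyadic_len (fst q) powr (-2 * s)" for q :: "int \<times> (int^'n)"
  have a0: "a q > 0" for q unfolding a_def using K2_pos[of "CARD('n)"] by (simp add: dyadic_len_def)
  have q0: "p/2 > 0" using p_pos by simp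
  have "epowr (whitney_sq c0 c1 (kappa (- s) f) z) (p/2) \<le> epowr (\<Sum>q\<in>S. ennreal (a q) * cube_sq k (fst q) (snd q) f) (p/2)"
    unfolding z S_def a_def by (intro epowr_mono V_upper[OF fm t]) (use q0 in simp)
  also have "\<dots> \<le> ennreal (real (Ncov TYPE('n)) powr (p/2)) * (\<Sum>q\<in>S. epowr (ennreal (a q) * cube_sq k (fst q) (snd q) f) (p/2))"
    by (rule epowr_sum_le[OF finS cardS q0])
  also have "\<dots> = (\<Sum>q\<in>S. Y TYPE('n) f q)"
    unfolding Y_def sum_distrib_left
    by (intro sum.cong refl) (subst epowr_cmult[OF a0 q0], simp add: a_def mult_ac)
  finally have 1: "epowr (whitney_sq c0 c1 (kappa (- s) f) z) (p/2) \<le> (\<Sum>q\<in>S. Y TYPE('n) f q)" .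
  have "(\<integral>\<^sup>+ q. indicator (DD (fst q) (snd q)) z * Y TYPE('n) f q / ennreal (fst z) \<partial>count_space UNIV)
     = (\<Sum>q\<in>S. indicator (DD (fst q) (snd q)) z * Y TYPE('n) f q / ennreal (fst z))"
    by (rule nn_integral_count_space'[OF finS]) (auto simp: S_def z)
  also have "\<dots> = (\<Sum>q\<in>S. Y TYPE('n) f q) / ennreal (fst z)"
    unfolding divide_ennreal_def sum_distrib_right
    by (intro sum.cong refl) (auto simp: S_def z)
  finally have 2: "(\<integral>\<^sup>+ q. indicator (DD (fst q) (snd q)) z * Y TYPE('n) f q / ennreal (fst z) \<partial>count_space UNIV)
     = (\<Sum>q\<in>S. Y TYPE('n) f q) / ennreal (fst z)" .
  have "indicator upper_half z * epowr (whitney_sq c0 c1 (kappa (- s) f) z) (p/2) / ennreal (fst z)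
      = epowr (whitney_sq c0 c1 (kappa (- s) f) z) (p/2) / ennreal (fst z)"
    using True by (simp add: upper_half_def)
  also have "\<dots> \<le> (\<Sum>q\<in>S. Y TYPE('n) f q) / ennreal (fst z)"
    by (rule divide_right_mono_ennreal[OF 1])
  finally show ?thesis using 2 by simp
qed

end

context WS begin

lemma K4_nonneg: "K4 n \<ge> 0"
proof -
  have "1 \<le> c1^2" using c1_gt1 by (intro one_le_power) simp
  then show ?thesis unfolding K4_def using R_pos by simp
qed

definition CU :: "'n itself \<Rightarrow> real" where
  "CU T = real (Ncov TYPE('n)) powr (p/2) * K2 CARD('n) powr (p/2) * K4 CARD('n)"

lemma CU_nonneg: "CU TYPE('n::finite) \<ge> 0"
  unfolding CU_def using K4_nonneg by simp

lemma Y_K4: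
  fixes f :: "real \<times> (real^'n) \<Rightarrow> complex^'m" and q :: "int \<times> (int^'n)"
  shows "Y TYPE('n) f q * ennreal (K4 CARD('n) * dyadic_len (fst q) ^ CARD('n))
   = ennreal (CU TYPE('n)) * (ennreal (dyadic_len (fst q) ^ CARD('n) * dyadic_len (fst q) powr (- s * p)) * epowr (cube_sq k (fst q) (snd q) f) (p / 2))"
proof -
  define l where "l = dyadic_len (fst q)"
  define n where "n = CARD('n)"
  define N where "N = real (Ncov TYPE('n))"
  have l0: "l > 0" by (simp add: l_def dyadic_len_def)
  have K40: "K4 n \<ge> 0" by (rule K4_nonneg)
  have K20: "K2 n > 0" by (rule K2_pos)
  have r: "N powr (p/2) * (K2 n * l powr (-2 * s)) powr (p/2) * (K4 n * l ^ n)
      = (N powr (p/2) * K2 n powr (p/2) * K4 n) * (l ^ n * l powr (- s * p))"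
  proof -
    have "(K2 n * l powr (-2 * s)) powr (p/2) = K2 n powr (p/2) * l powr (- s * p)"
      using K20 l0 by (simp add: powr_mult powr_powr)
    then show ?thesis by (simp add: mult_ac)
  qed
  have "Y TYPE('n) f q * ennreal (K4 CARD('n) * dyadic_len (fst q) ^ CARD('n))
     = ennreal (N powr (p/2) * (K2 n * l powr (-2 * s)) powr (p/2) * (K4 n * l ^ n)) * epowr (cube_sq k (fst q) (snd q) f) (p / 2)"
    unfolding Y_def l_def[symmetric] n_def[symmetric] N_def[symmetric]
    using K40 l0 by (simp add: ennreal_mult mult_ac)
  also have "\<dots> = ennreal (CU TYPE('n)) * (ennreal (l ^ n * l powr (- s * p)) * epowr (cube_sq k (fst q) (snd q) f) (p / 2))"
    unfolding r CU_def N_def[symmetric] n_def[symmetric] using K40 l0 K20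
    by (simp add: ennreal_mult mult_ac)
  finally show ?thesis by (simp add: l_def n_def)
qed

lemma Z_upper:
  fixes f :: "real \<times> (real^'n) \<Rightarrow> complex^'m"
  assumes fm: "f \<in> borel_measurable lebesgue"
  shows "(\<integral>\<^sup>+ z. indicator upper_half z * epowr (whitney_sq c0 c1 (kappa (- s) f) z) (p / 2) / ennreal (fst z) \<partial>lebesgue)
    \<le> ennreal (CU TYPE('n)) * (\<integral>\<^sup>+ q. ennreal (dyadic_len (fst q) ^ CARD('n) * dyadic_len (fst q) powr (- s * p))
                    * epowr (cube_sq k (fst q) (snd q) f) (p / 2) \<partial>(count_space (UNIV :: (int \<times> (int^'n)) set)))"
proof -
  have mq: "(\<lambda>z. indicator (DD (fst q) (snd q)) z * Y TYPE('n) f q / ennreal (fst z)) \<in> borel_measurable (lebesgue :: (real \<times> (real^'n)) measure)"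
    for q :: "int \<times> (int^'n)"
  proof -
    have [measurable]: "DD (fst q) (snd q) \<in> sets (lebesgue :: (real \<times> (real^'n)) measure)" by (rule DD_sets)
    show ?thesis by measurable
  qed
  have "(\<integral>\<^sup>+ z. indicator upper_half z * epowr (whitney_sq c0 c1 (kappa (- s) f) z) (p / 2) / ennreal (fst z) \<partial>lebesgue)
      \<le> (\<integral>\<^sup>+ z. (\<integral>\<^sup>+ q. indicator (DD (fst q) (snd q)) z * Y TYPE('n) f q / ennreal (fst z) \<partial>count_space UNIV) \<partial>lebesgue)"
    by (intro nn_integral_mono Z_pw[OF fm])
  also have "\<dots> = (\<integral>\<^sup>+ q. (\<integral>\<^sup>+ z. indicator (DD (fst q) (snd q)) z * Y TYPE('n) f q / ennreal (fst z) \<partial>lebesgue) \<partial>count_space UNIV)"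
    by (rule nn_integral_count_space_nn_integral) (auto intro: mq)
  also have "\<dots> = (\<integral>\<^sup>+ q. Y TYPE('n) f q * (\<integral>\<^sup>+ z. indicator (DD (fst q) (snd q)) z / ennreal (fst z) \<partial>lebesgue) \<partial>count_space UNIV)"
  proof (intro nn_integral_cong)
    fix q :: "int \<times> (int^'n)"
    have [measurable]: "DD (fst q) (snd q) \<in> sets (lebesgue :: (real \<times> (real^'n)) measure)" by (rule DD_sets)
    have "(\<integral>\<^sup>+ z. indicator (DD (fst q) (snd q)) z * Y TYPE('n) f q / ennreal (fst z) \<partial>lebesgue)
       = (\<integral>\<^sup>+ z. Y TYPE('n) f q * (indicator (DD (fst q) (snd q)) z / ennreal (fst z)) \<partial>lebesgue)"
      by (intro nn_integral_cong) (simp add: ennreal_times_divide mult.commute)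
    also have "\<dots> = Y TYPE('n) f q * (\<integral>\<^sup>+ z. indicator (DD (fst q) (snd q)) z / ennreal (fst z) \<partial>lebesgue)"
      by (rule nn_integral_cmult) measurable
    finally show "(\<integral>\<^sup>+ z. indicator (DD (fst q) (snd q)) z * Y TYPE('n) f q / ennreal (fst z) \<partial>lebesgue)
       = Y TYPE('n) f q * (\<integral>\<^sup>+ z. indicator (DD (fst q) (snd q)) z / ennreal (fst z) \<partial>lebesgue)" .
  qed
  also have "\<dots> \<le> (\<integral>\<^sup>+ q. Y TYPE('n) f q * ennreal (K4 CARD('n) * dyadic_len (fst q) ^ CARD('n)) \<partial>count_space UNIV)"
    by (intro nn_integral_mono mult_left_mono U7) simp
  also have "\<dots> = (\<integral>\<^sup>+ q. ennreal (CU TYPE('n)) * (ennreal (dyadic_len (fst q) ^ CARD('n) * dyadic_len (fst q) powr (- s * p)) * epowr (cube_sq k (fst q) (snd q) f) (p / 2)) \<partial>count_space UNIV)"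
    by (simp add: Y_K4)
  also have "\<dots> = ennreal (CU TYPE('n)) * (\<integral>\<^sup>+ q. ennreal (dyadic_len (fst q) ^ CARD('n) * dyadic_len (fst q) powr (- s * p)) * epowr (cube_sq k (fst q) (snd q) f) (p / 2) \<partial>count_space UNIV)"
    by (rule nn_integral_cmult) simp
  finally show ?thesis .
qed

end

context WS begin

definition ta :: real where "ta = 2 powr (k+1) / c1"
definition tb :: real where "tb = min (c1 * 2 powr k) (2 * ta)"

lemma ta_pos: "ta > 0" unfolding ta_def using c1_pos by simp

lemma ta_tb: "ta < tb"
proof -
  have e: "2 powr (k+1) = 2 * 2 powr k" by (simp add: powr_add)
  have "(3/2)*(3/2) < c1*c1" by (rule mult_strict_mono) (use c1_gt in auto)
  then have c: "2 < c1 * c1" by simp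
  have pk: "2 powr k > 0" by simp
  have "2 * 2 powr k < (c1 * c1) * 2 powr k" using c pk by (rule mult_strict_right_mono)
  then have "2 * 2 powr k < c1 * 2 powr k * c1" by (simp add: mult_ac)
  then have "2 powr (k+1) / c1 < c1 * 2 powr k" using c1_pos e by (simp add: divide_less_eq)
  then show ?thesis unfolding tb_def ta_def[symmetric] using ta_pos by simp
qed

lemma tb_pos: "tb > 0" using ta_tb ta_pos by simp

definition MM :: "'n::finite itself \<Rightarrow> nat" where
  "MM T = (SOME M. real CARD('n) < c0 * ta * 2^M)"

lemma MM_prop: "real CARD('n::finite) < c0 * ta * 2 ^ MM TYPE('n)"
proof -
  have "\<exists>M. real CARD('n) / (c0 * ta) < 2 ^ M" by (rule real_arch_pow) simp
  then have "\<exists>M::nat. real CARD('n) < c0 * ta * 2^M"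
    using c0_pos ta_pos by (simp add: divide_less_eq mult.commute)
  then show ?thesis unfolding MM_def by (rule someI_ex)
qed

definition EE :: "'n::finite itself \<Rightarrow> int \<Rightarrow> int^'n \<Rightarrow> (real \<times> (real^'n)) set" where
  "EE T j m = {(t,x). ta * dyadic_len j < t \<and> t < tb * dyadic_len j \<and> x \<in> dyadic_cube (j - int (MM TYPE('n))) m}"

definition PP :: "'n::finite itself \<Rightarrow> int \<Rightarrow> int^'n \<Rightarrow> (real \<times> (real^'n)) set" where
  "PP T j m = {(\<tau>,\<xi>). 2 powr k * dyadic_len j < \<tau> \<and> \<tau> < 2 powr (k+1) * dyadic_len j \<and>
      (\<forall>i. dyadic_len (j - int (MM TYPE('n))) * of_int (m$i) \<le> \<xi>$i \<and> \<xi>$i \<le> dyadic_len (j - int (MM TYPE('n))) * (of_int (m$i) + 1))}"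

definition Cset :: "'n::finite itself \<Rightarrow> (int^'n) set" where
  "Cset T = {c. \<forall>i. c$i \<in> {0..<2 ^ MM TYPE('n)}}"

definition child :: "'n::finite itself \<Rightarrow> int^'n \<Rightarrow> int^'n \<Rightarrow> int^'n" where
  "child T m c = (\<chi> i. 2 ^ MM TYPE('n) * m$i + c$i)"

lemma dyadic_len_sub: "dyadic_len (j - int M) = dyadic_len j / 2^M"
  by (simp add: dyadic_len_def powr_diff powr_realpow)

lemma Cset_card: "finite (Cset TYPE('n::finite)) \<and> card (Cset TYPE('n)) \<le> (2 ^ MM TYPE('n)) ^ CARD('n)"
  unfolding Cset_def
proof (rule card_vec_set)
  fix i :: 'n
  show "card {0..<(2::int) ^ MM TYPE('n)} \<le> 2 ^ MM TYPE('n)" by (simp add: nat_power_eq)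
qed simp

lemma L1:
  "whitney_cube k j m \<subseteq> (\<Union>c\<in>Cset TYPE('n::finite). PP TYPE('n) j (child TYPE('n) m c))"
proof
  fix w assume w: "w \<in> whitney_cube k j m"
  obtain \<tau> \<xi> where wt: "w = (\<tau>,\<xi>)" by (cases w)
  define M where "M = MM TYPE('n)"
  define l where "l = dyadic_len j"
  define h where "h = dyadic_len (j - int M)"
  have l0: "l > 0" by (simp add: l_def dyadic_len_def)
  have hl: "h = l / 2^M" unfolding h_def l_def by (rule dyadic_len_sub)
  have h0: "h > 0" using hl l0 by simp
  from w have t1: "2 powr k * l < \<tau>" "\<tau> < 2 powr (k+1) * l" and xi: "\<And>i. l * of_int (m$i) < \<xi>$i \<and> \<xi>$i < l * (of_int (m$i) + 1)"
    by (auto simp: whitney_cube_def wt l_def dyadic_cube_def dyadic_len_def)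
  define c :: "int^'n" where "c = (\<chi> i. \<lfloor>\<xi>$i / h\<rfloor> - 2^M * m$i)"
  have ch: "child TYPE('n) m c $ i = \<lfloor>\<xi>$i / h\<rfloor>" for i by (simp add: child_def c_def M_def)
  have q: "\<xi>$i / h = \<xi>$i * 2^M / l" for i using hl l0 by simp
  have cC: "c \<in> Cset TYPE('n)"
    unfolding Cset_def
  proof (clarify)
    fix i
    have a: "of_int (2^M * m$i) < \<xi>$i / h"
    proof -
      have "l * of_int (m$i) < \<xi>$i" using xi by blast
      then have "of_int (m$i) * 2^M < \<xi>$i * 2^M / l" using l0 by (simp add: field_simps)
      then show ?thesis using q by (simp add: mult.commute)
    qed
    have b: "\<xi>$i / h < of_int (2^M * (m$i + 1))"
    proof -
      have "\<xi>$i < l * (of_int (m$i) + 1)" using xi by blast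
      then have "\<xi>$i * 2^M < (l * (of_int (m$i) + 1)) * 2^M" by (intro mult_strict_right_mono) auto
      then have "\<xi>$i * 2^M / l < (of_int (m$i) + 1) * 2^M" using l0 by (simp add: divide_less_eq mult_ac)
      then show ?thesis using q by (simp add: mult.commute)
    qed
    have "2^M * m$i \<le> \<lfloor>\<xi>$i / h\<rfloor>" using a by (meson floor_less_iff le_floor_iff less_imp_le)
    moreover have "\<lfloor>\<xi>$i / h\<rfloor> < 2^M * (m$i + 1)" using b by (meson floor_less_iff)
    ultimately show "c $ i \<in> {0..<2 ^ MM TYPE('n)}" by (simp add: c_def M_def algebra_simps)
  qed
  have "w \<in> PP TYPE('n) j (child TYPE('n) m c)"
  proof -
    have "h * of_int \<lfloor>\<xi>$i / h\<rfloor> \<le> \<xi>$i" for i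
    proof -
      have "of_int \<lfloor>\<xi>$i / h\<rfloor> \<le> \<xi>$i / h" by linarith
      then have "h * of_int \<lfloor>\<xi>$i / h\<rfloor> \<le> h * (\<xi>$i / h)" using h0 by (intro mult_left_mono) auto
      then show ?thesis using h0 by simp
    qed
    moreover have "\<xi>$i \<le> h * (of_int \<lfloor>\<xi>$i / h\<rfloor> + 1)" for i
    proof -
      have "\<xi>$i / h \<le> of_int \<lfloor>\<xi>$i / h\<rfloor> + 1" by linarith
      then have "h * (\<xi>$i / h) \<le> h * (of_int \<lfloor>\<xi>$i / h\<rfloor> + 1)" using h0 by (intro mult_left_mono) auto
      then show ?thesis using h0 by simp
    qed
    ultimately show ?thesis using t1 unfolding PP_def wt ch by (simp add: h_def M_def l_def)
  qed
  then show "w \<in> (\<Union>c\<in>Cset TYPE('n). PP TYPE('n) j (child TYPE('n) m c))" using cC by blast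
qed

lemma EE_disj:
  assumes "z \<in> EE TYPE('n::finite) j1 m1" "z \<in> EE TYPE('n) j2 m2"
  shows "j1 = j2 \<and> m1 = m2"
proof -
  obtain t x where z: "z = (t,x)" by (cases z)
  have A: "j1 = j2" if "z \<in> EE TYPE('n) j1 m1" "z \<in> EE TYPE('n) j2 m2" "j1 \<le> j2" for j1 j2 m1 m2
  proof (rule ccontr)
    assume "j1 \<noteq> j2"
    then have "j1 + 1 \<le> j2" using that by simp
    then have "2 powr (j1 + 1) \<le> 2 powr j2" by (intro powr_mono) auto
    then have le: "2 * dyadic_len j1 \<le> dyadic_len j2" by (simp add: dyadic_len_def powr_add)
    have "t < tb * dyadic_len j1" "ta * dyadic_len j2 < t" using that by (auto simp: EE_def z)
    moreover have "tb * dyadic_len j1 \<le> ta * dyadic_len j2"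
    proof -
      have "tb * dyadic_len j1 \<le> (2 * ta) * dyadic_len j1" unfolding tb_def by (intro mult_right_mono) (auto simp: dyadic_len_def)
      also have "\<dots> \<le> ta * dyadic_len j2" using le ta_pos by (simp add: mult_left_mono mult.assoc)
      finally show ?thesis .
    qed
    ultimately show False by simp
  qed
  have j: "j1 = j2" using A[OF assms] A[OF assms(2,1)] by (cases "j1 \<le> j2") auto
  have "m1 $ i = m2 $ i" for i
  proof -
    define h where "h = dyadic_len (j1 - int (MM TYPE('n)))"
    have h0: "h > 0" by (simp add: h_def dyadic_len_def)
    have "h * of_int (m1$i) < x$i" "x$i < h * (of_int (m1$i) + 1)"
         "h * of_int (m2$i) < x$i" "x$i < h * (of_int (m2$i) + 1)"
      using assms j by (auto simp: EE_def z dyadic_cube_def h_def dyadic_len_def)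
    then have "h * of_int (m1$i) < h * (of_int (m2$i) + 1)" "h * of_int (m2$i) < h * (of_int (m1$i) + 1)" by linarith+
    then have "of_int (m1$i) < (of_int (m2$i) + 1 :: real)" "of_int (m2$i) < (of_int (m1$i) + 1 :: real)"
      using h0 mult_less_cancel_left_pos by blast+
    then show ?thesis by linarith
  qed
  then show ?thesis using j by (simp add: vec_eq_iff)
qed

end

context WS begin

definition psq :: "'n::finite itself \<Rightarrow> (real \<times> (real^'n) \<Rightarrow> complex^'m) \<Rightarrow> int \<Rightarrow> int^'n \<Rightarrow> ennreal" where
  "psq T f j m = (\<integral>\<^sup>+ w. indicator (PP TYPE('n) j m) w * ennreal ((norm (f w))\<^sup>2 / fst w ^ (1 + CARD('n))) \<partial>lebesgue)"

lemma PP_sets: "PP TYPE('n::finite) j m \<in> sets (lebesgue :: (real \<times> (real^'n)) measure)"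
proof -
  define h where "h = dyadic_len (j - int (MM TYPE('n)))"
  have "PP TYPE('n) j m = {2 powr k * dyadic_len j<..<2 powr (k+1) * dyadic_len j} \<times>
     cbox (\<chi> i. h * of_int (m$i)) ((\<chi> i. h * (of_int (m$i) + 1)) :: real^'n)"
    by (auto simp: PP_def h_def mem_box_cart)
  then show ?thesis by (simp add: Times_sets_lebesgue)
qed

lemma L2:
  fixes f :: "real \<times> (real^'n::finite) \<Rightarrow> complex^'m"
  assumes fm: "f \<in> borel_measurable lebesgue"
  shows "cube_sq k j m f \<le> (\<Sum>c\<in>Cset TYPE('n). psq TYPE('n) f j (child TYPE('n) m c))"
proof -
  define h where "h w = ennreal ((norm (f w))\<^sup>2 / fst w ^ (1 + CARD('n)))" for w
  have hm: "h \<in> borel_measurable lebesgue" unfolding h_def using fm by (rule meas_h)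
  have finC: "finite (Cset TYPE('n))" using Cset_card by blast
  have pw: "h w * indicator (whitney_cube k j m) w \<le> (\<Sum>c\<in>Cset TYPE('n). indicator (PP TYPE('n) j (child TYPE('n) m c)) w * h w)" for w
  proof (cases "w \<in> whitney_cube k j m")
    case True
    then obtain c where c: "c \<in> Cset TYPE('n)" "w \<in> PP TYPE('n) j (child TYPE('n) m c)" using L1 by blast
    have "h w * indicator (whitney_cube k j m) w = indicator (PP TYPE('n) j (child TYPE('n) m c)) w * h w"
      using True c by simp
    also have "\<dots> \<le> (\<Sum>c\<in>Cset TYPE('n). indicator (PP TYPE('n) j (child TYPE('n) m c)) w * h w)"
      by (rule member_le_sum[OF c(1)]) (auto simp: finC)
    finally show ?thesis .
  qed simp
  have "cube_sq k j m f = (\<integral>\<^sup>+ w. h w * indicator (whitney_cube k j m) w \<partial>lebesgue)"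
    by (simp add: cube_sq_def h_def)
  also have "\<dots> \<le> (\<integral>\<^sup>+ w. (\<Sum>c\<in>Cset TYPE('n). indicator (PP TYPE('n) j (child TYPE('n) m c)) w * h w) \<partial>lebesgue)"
    by (intro nn_integral_mono pw)
  also have "\<dots> = (\<Sum>c\<in>Cset TYPE('n). psq TYPE('n) f j (child TYPE('n) m c))"
    unfolding psq_def h_def[symmetric]
    by (rule nn_integral_sum) (intro borel_measurable_times_ennreal borel_measurable_indicator PP_sets hm)
  finally show ?thesis .
qed

definition Mk2 :: real where "Mk2 = max ((2 powr k) powr (2 * s)) ((2 powr (k+1)) powr (2 * s))"
definition K6 :: "nat \<Rightarrow> real" where "K6 n = Mk2 * kap n * tb^(n+1) / (2 powr k)^(n+1)"

lemma Mk2_pos: "Mk2 > 0" unfolding Mk2_def by (simp add: max_def)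
lemma K6_pos: "K6 n > 0" unfolding K6_def using Mk2_pos kap_pos tb_pos by simp

lemma L4r:
  fixes l \<tau> t :: real
  assumes l: "l > 0" and a: "2 powr k * l \<le> \<tau>" and b: "\<tau> \<le> 2 powr (k+1) * l"
    and t: "t > 0" and tt: "t \<le> tb * l"
  shows "1 / \<tau>^(n+1) \<le> K6 n * l powr (2 * s) * \<tau> powr (-2 * s) / mW c0 c1 t n"
proof -
  have tau0: "\<tau> > 0" using a l by (smt (verit) mult_pos_pos powr_gt_zero)
  have mu0: "mW c0 c1 t n > 0" using t c1_gt1 c0_pos by (rule mW_pos)
  have "(\<tau>/l) powr (2 * s) \<le> Mk2"
    unfolding Mk2_def using a b l by (intro powr_le_max) (auto simp: field_simps)
  moreover have "(\<tau>/l) powr (2 * s) > 0" using tau0 l by simp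
  ultimately have "1 / Mk2 \<le> 1 / (\<tau>/l) powr (2 * s)"
    using Mk2_pos by (intro divide_left_mono) auto
  moreover have "1 / (\<tau>/l) powr (2 * s) = l powr (2 * s) * \<tau> powr (-2 * s)"
  proof -
    have i: "\<tau> powr (-2 * s) = inverse (\<tau> powr (2 * s))" using powr_minus[of \<tau> "2 * s"] by simp
    show ?thesis unfolding i using tau0 l by (simp add: powr_divide field_simps)
  qed
  ultimately have 1: "1 / Mk2 \<le> l powr (2 * s) * \<tau> powr (-2 * s)" by simp
  have 2: "(2 powr k * l)^(n+1) \<le> \<tau>^(n+1)" using a l by (intro power_mono) auto
  have 3: "t^(n+1) \<le> (tb * l)^(n+1)" using t tt by (intro power_mono) auto
  have "mW c0 c1 t n \<le> kap n * (tb * l)^(n+1)" unfolding mW_kap using 3 kap_pos[of n] by simp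
  also have "\<dots> = K6 n * (1 / Mk2) * (2 powr k * l)^(n+1)"
    unfolding K6_def using Mk2_pos by (simp add: power_mult_distrib field_simps)
  also have "\<dots> \<le> K6 n * (l powr (2 * s) * \<tau> powr (-2 * s)) * \<tau>^(n+1)"
    using 1 2 K6_pos[of n] Mk2_pos l by (intro mult_mono mult_left_mono) auto
  finally have "mW c0 c1 t n \<le> K6 n * (l powr (2 * s) * \<tau> powr (-2 * s)) * \<tau>^(n+1)" .
  then show ?thesis using mu0 tau0 by (simp add: field_simps)
qed

lemma meas_kf:
  fixes f :: "real \<times> (real^'n) \<Rightarrow> complex^'m"
  assumes fm: "f \<in> borel_measurable lebesgue"
  shows "(\<lambda>w. ennreal ((norm (kappa (-s) f w))\<^sup>2)) \<in> borel_measurable lebesgue"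
  unfolding kappa_def using fm by measurable

lemma Omega_sets: "whitney_region c0 c1 t x \<in> sets (lebesgue :: (real \<times> (real^'n)) measure)"
  unfolding whitney_region_eq by (intro Times_sets_lebesgue) auto

lemma L4:
  fixes f :: "real \<times> (real^'n::finite) \<Rightarrow> complex^'m"
  assumes fm: "f \<in> borel_measurable lebesgue" and z: "z \<in> EE TYPE('n) j m"
  shows "psq TYPE('n) f j m \<le> ennreal (K6 CARD('n) * dyadic_len j powr (2 * s)) * whitney_sq c0 c1 (kappa (-s) f) z"
proof -
  obtain t x where zz: "z = (t,x)" by (cases z)
  define n where "n = CARD('n)"
  define l where "l = dyadic_len j"
  define M where "M = MM TYPE('n)"
  define hh where "hh = dyadic_len (j - int M)"
  have l0: "l > 0" by (simp add: l_def dyadic_len_def)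
  have hl: "hh = l / 2^M" unfolding hh_def l_def by (rule dyadic_len_sub)
  from z have t1: "ta * l < t" and t2: "t < tb * l" and xc: "x \<in> dyadic_cube (j - int M) m"
    by (auto simp: EE_def zz l_def M_def)
  have t: "t > 0" using t1 ta_pos l0 by (smt (verit) mult_pos_pos)
  define \<Omega> where "\<Omega> = whitney_region c0 c1 t x"
  define \<mu> where "\<mu> = mW c0 c1 t n"
  have mu0: "\<mu> > 0" unfolding \<mu>_def using t c1_gt1 c0_pos by (rule mW_pos)
  define C where "C = K6 n * l powr (2 * s)"
  have C0: "C > 0" unfolding C_def using K6_pos[of n] l0 by simp
  have sub: "w \<in> \<Omega>" if w: "w \<in> PP TYPE('n) j m" for w
  proof -
    obtain \<tau> \<xi> where wt: "w = (\<tau>,\<xi>)" by (cases w)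
    from w have a1: "2 powr k * l < \<tau>" and a2: "\<tau> < 2 powr (k+1) * l"
      and xi: "\<And>i. hh * of_int (m$i) \<le> \<xi>$i \<and> \<xi>$i \<le> hh * (of_int (m$i) + 1)"
      by (auto simp: PP_def wt l_def hh_def M_def)
    have "t / c1 < 2 powr k * l"
    proof -
      have "tb \<le> c1 * 2 powr k" by (simp add: tb_def)
      then have "tb * l \<le> c1 * 2 powr k * l" using l0 by (intro mult_right_mono) auto
      then have "t < c1 * (2 powr k * l)" using t2 by (simp add: mult.assoc)
      then show ?thesis using c1_pos by (simp add: divide_less_eq mult.commute)
    qed
    then have b1: "t / c1 < \<tau>" using a1 by simp
    have "2 powr (k+1) * l = c1 * (ta * l)" unfolding ta_def using c1_pos by simp
    then have b2: "\<tau> < c1 * t" using a2 t1 c1_pos by (smt (verit) mult_strict_left_mono)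
    have xi2: "\<bar>x$i - \<xi>$i\<bar> \<le> hh" for i
    proof -
      have "hh * of_int (m$i) < x$i" "x$i < hh * (of_int (m$i) + 1)"
        using xc by (auto simp: dyadic_cube_def hh_def dyadic_len_def)
      then show ?thesis using xi[of i] by (simp add: algebra_simps abs_le_iff)
    qed
    have "dist x \<xi> \<le> (\<Sum>i\<in>UNIV. \<bar>(x - \<xi>)$i\<bar>)" unfolding dist_norm by (rule norm_le_l1_cart)
    also have "\<dots> \<le> (\<Sum>i\<in>(UNIV::'n set). hh)" using xi2 by (intro sum_mono) simp
    also have "\<dots> = real n * hh" by (simp add: n_def)
    also have "\<dots> < c0 * t"
    proof -
      have "real n < c0 * ta * 2^M" using MM_prop unfolding n_def M_def .
      then have "real n * hh < c0 * ta * 2^M * (l / 2^M)" unfolding hl using l0 by (intro mult_strict_right_mono) auto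
      also have "\<dots> = c0 * (ta * l)" by simp
      also have "\<dots> < c0 * t" using t1 c0_pos by simp
      finally show ?thesis .
    qed
    finally show ?thesis unfolding \<Omega>_def whitney_region_def wt using b1 b2 by simp
  qed
  have pw: "indicator (PP TYPE('n) j m) w * ennreal ((norm (f w))\<^sup>2 / fst w ^ (1 + CARD('n)))
      \<le> ennreal (C / \<mu>) * (ennreal ((norm (kappa (-s) f w))\<^sup>2) * indicator \<Omega> w)" for w
  proof (cases "w \<in> PP TYPE('n) j m")
    case True
    obtain \<tau> \<xi> where wt: "w = (\<tau>,\<xi>)" by (cases w)
    from True have a1: "2 powr k * l \<le> \<tau>" and a2: "\<tau> \<le> 2 powr (k+1) * l"
      by (auto simp: PP_def wt l_def)
    have tau0: "\<tau> > 0" using a1 l0 by (smt (verit) mult_pos_pos powr_gt_zero)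
    have key: "1 / \<tau>^(n+1) \<le> C * \<tau> powr (-2 * s) / \<mu>"
      using L4r[OF l0 a1 a2 t] t2 unfolding C_def \<mu>_def by (simp add: mult.assoc)
    have "(norm (f w))\<^sup>2 / fst w ^ (1 + CARD('n)) = (1 / \<tau>^(n+1)) * (norm (f w))\<^sup>2"
      by (simp add: wt n_def)
    also have "\<dots> \<le> (C * \<tau> powr (-2 * s) / \<mu>) * (norm (f w))\<^sup>2"
      using key by (intro mult_right_mono) auto
    also have "\<dots> = (C / \<mu>) * (norm (kappa (-s) f w))\<^sup>2"
      using norm_kappa_sq[of w f] tau0 wt by simp
    finally have r: "(norm (f w))\<^sup>2 / fst w ^ (1 + CARD('n)) \<le> (C / \<mu>) * (norm (kappa (-s) f w))\<^sup>2" .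
    show ?thesis using True sub[OF True] r C0 mu0
      by (simp add: ennreal_mult'[symmetric] ennreal_leI)
  qed simp
  have "psq TYPE('n) f j m \<le> (\<integral>\<^sup>+ w. ennreal (C / \<mu>) * (ennreal ((norm (kappa (-s) f w))\<^sup>2) * indicator \<Omega> w) \<partial>lebesgue)"
    unfolding psq_def by (intro nn_integral_mono pw)
  also have "\<dots> = ennreal (C / \<mu>) * (\<integral>\<^sup>+ w. ennreal ((norm (kappa (-s) f w))\<^sup>2) * indicator \<Omega> w \<partial>lebesgue)"
    by (intro nn_integral_cmult borel_measurable_times_ennreal meas_kf[OF fm] borel_measurable_indicator)
       (simp add: \<Omega>_def Omega_sets)
  also have "\<dots> = ennreal C * ((\<integral>\<^sup>+ w. ennreal ((norm (kappa (-s) f w))\<^sup>2) * indicator \<Omega> w \<partial>lebesgue) / ennreal \<mu>)"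
  proof -
    have "ennreal (C / \<mu>) = ennreal C / ennreal \<mu>" using divide_ennreal[of C \<mu>] C0 mu0 by simp
    then show ?thesis unfolding divide_ennreal_def by (simp add: mult_ac)
  qed
  also have "(\<integral>\<^sup>+ w. ennreal ((norm (kappa (-s) f w))\<^sup>2) * indicator \<Omega> w \<partial>lebesgue) / ennreal \<mu> = whitney_sq c0 c1 (kappa (-s) f) z"
    unfolding whitney_sq_def zz \<Omega>_def \<mu>_def n_def
    by (simp add: emeasure_whitney_region[OF t c1_gt1 c0_pos])
  finally show ?thesis by (simp add: C_def n_def l_def)
qed

end

lemma ennreal_rearr: "0 \<le> a \<Longrightarrow> 0 \<le> b \<Longrightarrow> 0 \<le> c \<Longrightarrow>
   ennreal a * (ennreal b * Z * ennreal c) = ennreal (a * b * c) * Z"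
  by (simp add: ennreal_mult mult_ac)

context WS begin

definition K8 :: "'n::finite itself \<Rightarrow> real" where
  "K8 T = tb * (2 ^ MM TYPE('n)) ^ CARD('n) / (tb - ta)"

lemma K8_pos: "K8 TYPE('n::finite) > 0" unfolding K8_def using ta_tb tb_pos by simp

lemma EE_eq: "EE TYPE('n::finite) j m = {ta * dyadic_len j <..< tb * dyadic_len j} \<times>
   box (\<chi> i. dyadic_len (j - int (MM TYPE('n))) * of_int (m$i)) ((\<chi> i. dyadic_len (j - int (MM TYPE('n))) * (of_int (m$i) + 1)) :: real^'n)"
  by (auto simp: EE_def dyadic_cube_def dyadic_len_def mem_box_cart)

lemma EE_sets: "EE TYPE('n::finite) j m \<in> sets (lebesgue :: (real \<times> (real^'n)) measure)"
  unfolding EE_eq by (simp add: Times_sets_lebesgue)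

lemma L5:
  fixes Z :: ennreal
  shows "ennreal (dyadic_len j ^ CARD('n)) * Z \<le>
    ennreal (K8 TYPE('n::finite)) * (\<integral>\<^sup>+ z. indicator (EE TYPE('n) j m) z * Z / ennreal (fst z) \<partial>(lebesgue :: (real \<times> (real^'n)) measure))"
proof -
  define n where "n = CARD('n)"
  define M where "M = MM TYPE('n)"
  define l where "l = dyadic_len j"
  define h where "h = dyadic_len (j - int M)"
  have l0: "l > 0" by (simp add: l_def dyadic_len_def)
  have hl: "h = l / 2^M" unfolding h_def l_def by (rule dyadic_len_sub)
  have h0: "h > 0" using hl l0 by simp
  define E where "E = EE TYPE('n) j m"
  have Es: "E \<in> sets (lebesgue :: (real \<times> (real^'n)) measure)" unfolding E_def by (rule EE_sets)
  have mE: "emeasure lebesgue E = ennreal ((tb - ta) * l * h ^ n)"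
  proof -
    have "emeasure lebesgue E = emeasure lborel {ta * l <..< tb * l} *
       emeasure lborel (box (\<chi> i. h * of_int (m$i)) ((\<chi> i. h * (of_int (m$i) + 1)) :: real^'n))"
      unfolding E_def EE_eq by (subst emeasure_lebesgue_Times) (auto simp: l_def h_def M_def)
    also have "emeasure lborel (box (\<chi> i. h * of_int (m$i)) ((\<chi> i. h * (of_int (m$i) + 1)) :: real^'n))
       = ennreal (\<Prod>i\<in>(UNIV::'n set). h)"
      using h0 by (subst box_measure_cart) (auto simp: algebra_simps)
    also have "emeasure lborel {ta * l <..< tb * l} = ennreal ((tb - ta) * l)"
      using ta_tb l0 by (simp add: algebra_simps)
    finally show ?thesis using ta_tb l0 h0 by (simp add: ennreal_mult n_def)
  qed
  have pw: "ennreal (1 / (tb * l)) * Z * indicator E z \<le> indicator E z * Z / ennreal (fst z)" for z :: "real \<times> (real^'n)"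
  proof (cases "z \<in> E")
    case True
    then have a: "ta * l < fst z" and b: "fst z < tb * l" by (cases z; auto simp: E_def EE_def l_def)+
    have t0: "fst z > 0" using a ta_pos l0 by (smt (verit) mult_pos_pos)
    have "ennreal (1 / (tb * l)) \<le> ennreal (1 / fst z)"
      using b t0 by (intro ennreal_leI) (simp add: frac_le)
    also have "ennreal (1 / fst z) = 1 / ennreal (fst z)" using divide_ennreal[of 1 "fst z"] t0 by simp
    finally have "ennreal (1 / (tb * l)) \<le> 1 / ennreal (fst z)" .
    then have "Z * ennreal (1 / (tb * l)) \<le> Z * (1 / ennreal (fst z))" by (rule mult_left_mono) simp
    then show ?thesis using True by (simp add: ennreal_times_divide mult.commute)
  qed simp
  have "ennreal (1 / (tb * l)) * Z * emeasure lebesgue E \<le> (\<integral>\<^sup>+ z. indicator E z * Z / ennreal (fst z) \<partial>lebesgue)"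
  proof -
    have "ennreal (1 / (tb * l)) * Z * emeasure lebesgue E = (\<integral>\<^sup>+ z. ennreal (1 / (tb * l)) * Z * indicator E z \<partial>lebesgue)"
      by (rule nn_integral_cmult_indicator[OF Es, symmetric])
    also have "\<dots> \<le> (\<integral>\<^sup>+ z. indicator E z * Z / ennreal (fst z) \<partial>lebesgue)"
      by (intro nn_integral_mono pw)
    finally show ?thesis .
  qed
  then have "ennreal (K8 TYPE('n)) * (ennreal (1 / (tb * l)) * Z * emeasure lebesgue E)
    \<le> ennreal (K8 TYPE('n)) * (\<integral>\<^sup>+ z. indicator E z * Z / ennreal (fst z) \<partial>lebesgue)"
    by (rule mult_left_mono) simp
  moreover have "ennreal (K8 TYPE('n)) * (ennreal (1 / (tb * l)) * Z * emeasure lebesgue E) = ennreal (l ^ n) * Z"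
  proof -
    have r: "K8 TYPE('n) * (1 / (tb * l)) * ((tb - ta) * l * h ^ n) = l ^ n"
      unfolding K8_def hl M_def[symmetric] n_def[symmetric] using ta_tb tb_pos l0
      by (simp add: field_simps power_divide)
    have "ennreal (K8 TYPE('n)) * (ennreal (1 / (tb * l)) * Z * emeasure lebesgue E)
       = ennreal (K8 TYPE('n) * (1 / (tb * l)) * ((tb - ta) * l * h ^ n)) * Z"
      unfolding mE using K8_pos[where 'n='n] tb_pos l0 ta_tb h0
      by (intro ennreal_rearr) auto
    then show ?thesis unfolding r .
  qed
  ultimately show ?thesis by (simp add: E_def l_def n_def)
qed

end

lemma nn_integral_reindex_le:
  fixes G :: "'a \<Rightarrow> ennreal" and g :: "'a \<Rightarrow> 'a"
  assumes "inj g"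
  shows "(\<integral>\<^sup>+ q. G (g q) \<partial>count_space UNIV) \<le> (\<integral>\<^sup>+ q. G q \<partial>count_space UNIV)"
proof -
  have "(\<integral>\<^sup>+ q. G (g q) \<partial>count_space UNIV) = (\<integral>\<^sup>+ y. G y \<partial>count_space (range g))"
    by (rule nn_integral_bij_count_space) (use assms in \<open>simp add: inj_on_imp_bij_betw\<close>)
  also have "\<dots> = (\<integral>\<^sup>+ y. G y * indicator (range g) y \<partial>count_space UNIV)"
    by (rule nn_integral_count_space_indicator) simp
  also have "\<dots> \<le> (\<integral>\<^sup>+ y. G y \<partial>count_space UNIV)"
    by (intro nn_integral_mono) (simp split: split_indicator)
  finally show ?thesis .
qed

context WS begin

definition Zp :: "'n::finite itself \<Rightarrow> (real \<times> (real^'n) \<Rightarrow> complex^'m) \<Rightarrow> int \<times> (int^'n) \<Rightarrow> ennreal" where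
  "Zp T f q = ennreal (dyadic_len (fst q) powr (- s * p) * K6 CARD('n) powr (- (p/2))) * epowr (psq TYPE('n) f (fst q) (snd q)) (p/2)"

lemma Fprime:
  fixes f :: "real \<times> (real^'n::finite) \<Rightarrow> complex^'m" and z :: "real \<times> (real^'n)"
  assumes fm: "f \<in> borel_measurable lebesgue"
  shows "(\<integral>\<^sup>+ q. indicator (EE TYPE('n) (fst q) (snd q)) z * Zp TYPE('n) f q / ennreal (fst z) \<partial>count_space UNIV)
     \<le> indicator upper_half z * epowr (whitney_sq c0 c1 (kappa (- s) f) z) (p / 2) / ennreal (fst z)"
proof (cases "\<exists>q0. z \<in> EE TYPE('n) (fst q0) (snd q0)")
  case False
  then have "(\<integral>\<^sup>+ q. indicator (EE TYPE('n) (fst q) (snd q)) z * Zp TYPE('n) f q / ennreal (fst z) \<partial>count_space UNIV) = 0"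
    by (simp add: indicator_def)
  then show ?thesis by simp
next
  case True
  then obtain q0 where q0: "z \<in> EE TYPE('n) (fst q0) (snd q0)" by blast
  define j where "j = fst q0"
  define l where "l = dyadic_len j"
  define n where "n = CARD('n)"
  have l0: "l > 0" by (simp add: l_def dyadic_len_def)
  have K60: "K6 n > 0" by (rule K6_pos)
  have pp: "p/2 > 0" using p_pos by simp
  have "(\<integral>\<^sup>+ q. indicator (EE TYPE('n) (fst q) (snd q)) z * Zp TYPE('n) f q / ennreal (fst z) \<partial>count_space UNIV)
     = (\<Sum>q\<in>{q0}. indicator (EE TYPE('n) (fst q) (snd q)) z * Zp TYPE('n) f q / ennreal (fst z))"
  proof (rule nn_integral_count_space')
    fix q assume "q \<notin> {q0}"
    then have "z \<notin> EE TYPE('n) (fst q) (snd q)" using EE_disj[OF q0] by (cases q; cases q0) auto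
    then show "indicator (EE TYPE('n) (fst q) (snd q)) z * Zp TYPE('n) f q / ennreal (fst z) = 0" by simp
  qed auto
  also have "\<dots> = Zp TYPE('n) f q0 / ennreal (fst z)" using q0 by simp
  also have "Zp TYPE('n) f q0 \<le> epowr (whitney_sq c0 c1 (kappa (- s) f) z) (p / 2)"
  proof -
    have "psq TYPE('n) f j (snd q0) \<le> ennreal (K6 n * l powr (2 * s)) * whitney_sq c0 c1 (kappa (-s) f) z"
      using L4[OF fm q0] unfolding j_def l_def n_def .
    then have "epowr (psq TYPE('n) f j (snd q0)) (p/2) \<le> epowr (ennreal (K6 n * l powr (2 * s)) * whitney_sq c0 c1 (kappa (-s) f) z) (p/2)"
      by (rule epowr_mono) (use pp in simp)
    also have "\<dots> = ennreal ((K6 n * l powr (2 * s)) powr (p/2)) * epowr (whitney_sq c0 c1 (kappa (-s) f) z) (p/2)"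
      using K60 l0 pp by (intro epowr_cmult) auto
    finally have 1: "epowr (psq TYPE('n) f j (snd q0)) (p/2) \<le> ennreal ((K6 n * l powr (2 * s)) powr (p/2)) * epowr (whitney_sq c0 c1 (kappa (-s) f) z) (p/2)" .
    have r: "(l powr (- s * p) * K6 n powr (- (p/2))) * (K6 n * l powr (2 * s)) powr (p/2) = 1"
    proof -
      have "(K6 n * l powr (2 * s)) powr (p/2) = K6 n powr (p/2) * l powr (s * p)"
        using K60 l0 by (simp add: powr_mult powr_powr)
      then have "(l powr (- s * p) * K6 n powr (- (p/2))) * (K6 n * l powr (2 * s)) powr (p/2)
          = (l powr (- s * p) * l powr (s * p)) * (K6 n powr (- (p/2)) * K6 n powr (p/2))" by (simp add: mult_ac)
      also have "\<dots> = 1" using K60 l0 by (simp flip: powr_add)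
      finally show ?thesis .
    qed
    have "Zp TYPE('n) f q0 = ennreal (l powr (- s * p) * K6 n powr (- (p/2))) * epowr (psq TYPE('n) f j (snd q0)) (p/2)"
      by (simp add: Zp_def l_def j_def n_def)
    also have "\<dots> \<le> ennreal (l powr (- s * p) * K6 n powr (- (p/2))) * (ennreal ((K6 n * l powr (2 * s)) powr (p/2)) * epowr (whitney_sq c0 c1 (kappa (-s) f) z) (p/2))"
      by (rule mult_left_mono[OF 1]) simp
    also have "\<dots> = ennreal ((l powr (- s * p) * K6 n powr (- (p/2))) * (K6 n * l powr (2 * s)) powr (p/2)) * epowr (whitney_sq c0 c1 (kappa (-s) f) z) (p/2)"
      by (simp add: ennreal_mult mult.assoc)
    also have "\<dots> = epowr (whitney_sq c0 c1 (kappa (-s) f) z) (p/2)" unfolding r by simp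
    finally show ?thesis by simp
  qed
  then have "Zp TYPE('n) f q0 / ennreal (fst z) \<le> epowr (whitney_sq c0 c1 (kappa (- s) f) z) (p / 2) / ennreal (fst z)"
    by (rule divide_right_mono_ennreal)
  also have "\<dots> = indicator upper_half z * epowr (whitney_sq c0 c1 (kappa (- s) f) z) (p / 2) / ennreal (fst z)"
  proof -
    have "fst z > 0"
    proof -
      from q0 have "ta * l < fst z" by (cases z) (auto simp: EE_def l_def j_def)
      then show ?thesis using ta_pos l0 by (smt (verit) mult_pos_pos)
    qed
    then show ?thesis by (simp add: upper_half_def)
  qed
  finally show ?thesis .
qed

end

context WS begin

definition NCr :: "'n::finite itself \<Rightarrow> real" where
  "NCr T = real ((2 ^ MM TYPE('n)) ^ CARD('n))"

definition G :: "'n::finite itself \<Rightarrow> (real \<times> (real^'n) \<Rightarrow> complex^'m) \<Rightarrow> int \<times> (int^'n) \<Rightarrow> ennreal" where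
  "G T f q = ennreal (NCr TYPE('n) powr (p/2) * K6 CARD('n) powr (p/2)) * (ennreal (dyadic_len (fst q) ^ CARD('n)) * Zp TYPE('n) f q)"

definition CL :: "'n::finite itself \<Rightarrow> real" where
  "CL T = NCr TYPE('n) * (NCr TYPE('n) powr (p/2) * K6 CARD('n) powr (p/2)) * K8 TYPE('n)"

lemma CL_pos: "CL TYPE('n::finite) > 0"
  unfolding CL_def using K6_pos[of "CARD('n)"] K8_pos[where 'n='n]
  by (intro mult_pos_pos) (auto simp: NCr_def)

lemma ennreal_assoc2: "0 \<le> a \<Longrightarrow> 0 \<le> b \<Longrightarrow> ennreal a * (ennreal b * X) = ennreal (a * b) * X"
  by (simp add: ennreal_mult mult.assoc)

lemma stepA:
  fixes f :: "real \<times> (real^'n::finite) \<Rightarrow> complex^'m"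
  assumes fm: "f \<in> borel_measurable lebesgue"
  shows "ennreal (dyadic_len j ^ CARD('n) * dyadic_len j powr (- s * p)) * epowr (cube_sq k j m f) (p / 2)
    \<le> (\<Sum>c\<in>Cset TYPE('n). G TYPE('n) f (j, child TYPE('n) m c))"
proof -
  define l where "l = dyadic_len j"
  define n where "n = CARD('n)"
  have l0: "l > 0" by (simp add: l_def dyadic_len_def)
  have pp: "p/2 > 0" using p_pos by simp
  have K60: "K6 n > 0" by (rule K6_pos)
  have finC: "finite (Cset TYPE('n))" and cardC: "card (Cset TYPE('n)) \<le> (2 ^ MM TYPE('n)) ^ CARD('n)"
    using Cset_card by auto
  define E where "E c = epowr (psq TYPE('n) f j (child TYPE('n) m c)) (p/2)" for c
  have "epowr (cube_sq k j m f) (p / 2) \<le> epowr (\<Sum>c\<in>Cset TYPE('n). psq TYPE('n) f j (child TYPE('n) m c)) (p/2)"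
    by (rule epowr_mono[OF L2[OF fm]]) (use pp in simp)
  also have "\<dots> \<le> ennreal (NCr TYPE('n) powr (p/2)) * (\<Sum>c\<in>Cset TYPE('n). E c)"
    unfolding NCr_def E_def by (rule epowr_sum_le[OF finC cardC pp])
  finally have 1: "epowr (cube_sq k j m f) (p / 2) \<le> ennreal (NCr TYPE('n) powr (p/2)) * (\<Sum>c\<in>Cset TYPE('n). E c)" .
  have "ennreal (l ^ n * l powr (- s * p)) * epowr (cube_sq k j m f) (p / 2)
     \<le> ennreal (l ^ n * l powr (- s * p)) * (ennreal (NCr TYPE('n) powr (p/2)) * (\<Sum>c\<in>Cset TYPE('n). E c))"
    by (rule mult_left_mono[OF 1]) simp
  also have "\<dots> = ennreal (l ^ n * l powr (- s * p) * NCr TYPE('n) powr (p/2)) * (\<Sum>c\<in>Cset TYPE('n). E c)"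
    using l0 by (intro ennreal_assoc2) auto
  also have "\<dots> = (\<Sum>c\<in>Cset TYPE('n). ennreal (l ^ n * l powr (- s * p) * NCr TYPE('n) powr (p/2)) * E c)"
    by (simp only: sum_distrib_left)
  also have "\<dots> = (\<Sum>c\<in>Cset TYPE('n). G TYPE('n) f (j, child TYPE('n) m c))"
  proof -
    have r: "NCr TYPE('n) powr (p/2) * K6 n powr (p/2) * (l ^ n * (l powr (- s * p) * K6 n powr (- (p/2))))
       = l ^ n * l powr (- s * p) * NCr TYPE('n) powr (p/2)"
    proof -
      have "K6 n powr (p/2) * K6 n powr (- (p/2)) = 1" using K60 by (simp flip: powr_add)
      then show ?thesis by (simp add: mult_ac)
    qed
    have eqc: "G TYPE('n) f (j, child TYPE('n) m c) = ennreal (l ^ n * l powr (- s * p) * NCr TYPE('n) powr (p/2)) * E c" for c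
    proof -
      have "G TYPE('n) f (j, child TYPE('n) m c)
         = ennreal (NCr TYPE('n) powr (p/2) * K6 n powr (p/2)) * (ennreal (l ^ n) * (ennreal (l powr (- s * p) * K6 n powr (- (p/2))) * E c))"
        by (simp add: G_def Zp_def E_def l_def n_def)
      also have "\<dots> = ennreal (NCr TYPE('n) powr (p/2) * K6 n powr (p/2) * (l ^ n * (l powr (- s * p) * K6 n powr (- (p/2))))) * E c"
        using l0 by (simp add: ennreal_mult mult.assoc)
      also have "\<dots> = ennreal (l ^ n * l powr (- s * p) * NCr TYPE('n) powr (p/2)) * E c" unfolding r ..
      finally show ?thesis .
    qed
    show ?thesis by (simp only: eqc)
  qed
  finally show ?thesis by (simp add: l_def n_def)
qed

lemma child_inj: "inj (\<lambda>q. (fst q, child TYPE('n::finite) (snd q) c))"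
  by (auto simp: inj_def child_def vec_eq_iff prod_eq_iff)

lemma Z_lower:
  fixes f :: "real \<times> (real^'n::finite) \<Rightarrow> complex^'m"
  assumes fm: "f \<in> borel_measurable lebesgue"
  shows "(\<integral>\<^sup>+ q. ennreal (dyadic_len (fst q) ^ CARD('n) * dyadic_len (fst q) powr (- s * p))
                    * epowr (cube_sq k (fst q) (snd q) f) (p / 2) \<partial>(count_space (UNIV :: (int \<times> (int^'n)) set)))
    \<le> ennreal (CL TYPE('n)) * (\<integral>\<^sup>+ z. indicator upper_half z * epowr (whitney_sq c0 c1 (kappa (- s) f) z) (p / 2) / ennreal (fst z) \<partial>lebesgue)"
  (is "?ID \<le> _ * ?IZ")
proof -
  define K where "K = NCr TYPE('n) powr (p/2) * K6 CARD('n) powr (p/2)"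
  have K0: "K \<ge> 0" unfolding K_def by simp
  have finC: "finite (Cset TYPE('n))" and cardC: "card (Cset TYPE('n)) \<le> (2 ^ MM TYPE('n)) ^ CARD('n)"
    using Cset_card by auto
  have "(\<integral>\<^sup>+ q. ennreal (dyadic_len (fst q) ^ CARD('n) * dyadic_len (fst q) powr (- s * p))
                    * epowr (cube_sq k (fst q) (snd q) f) (p / 2) \<partial>(count_space (UNIV :: (int \<times> (int^'n)) set)))
     \<le> (\<integral>\<^sup>+ q. (\<Sum>c\<in>Cset TYPE('n). G TYPE('n) f (fst q, child TYPE('n) (snd q) c)) \<partial>count_space UNIV)"
    by (intro nn_integral_mono stepA[OF fm])
  also have "\<dots> = (\<Sum>c\<in>Cset TYPE('n). \<integral>\<^sup>+ q. G TYPE('n) f (fst q, child TYPE('n) (snd q) c) \<partial>count_space UNIV)"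
    by (rule nn_integral_sum) simp
  also have "\<dots> \<le> (\<Sum>c\<in>Cset TYPE('n). \<integral>\<^sup>+ q. G TYPE('n) f q \<partial>count_space UNIV)"
    by (intro sum_mono nn_integral_reindex_le[OF child_inj, where G="G TYPE('n) f", simplified])
  also have "\<dots> = of_nat (card (Cset TYPE('n))) * (\<integral>\<^sup>+ q. G TYPE('n) f q \<partial>count_space UNIV)" by simp
  also have "\<dots> \<le> ennreal (NCr TYPE('n)) * (\<integral>\<^sup>+ q. G TYPE('n) f q \<partial>count_space UNIV)"
  proof (rule mult_right_mono)
    have "real (card (Cset TYPE('n))) \<le> NCr TYPE('n)" unfolding NCr_def using cardC of_nat_le_iff by blast
    then show "of_nat (card (Cset TYPE('n))) \<le> ennreal (NCr TYPE('n))"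
      by (simp add: ennreal_of_nat_eq_real_of_nat ennreal_leI)
  qed simp
  also have "(\<integral>\<^sup>+ q. G TYPE('n) f q \<partial>count_space UNIV)
      \<le> (\<integral>\<^sup>+ q. ennreal K * (ennreal (K8 TYPE('n)) * (\<integral>\<^sup>+ z. indicator (EE TYPE('n) (fst q) (snd q)) z * Zp TYPE('n) f q / ennreal (fst z) \<partial>lebesgue)) \<partial>count_space UNIV)"
    unfolding G_def K_def[symmetric] by (intro nn_integral_mono mult_left_mono L5) simp
  also have "\<dots> = ennreal (K * K8 TYPE('n)) * (\<integral>\<^sup>+ q. (\<integral>\<^sup>+ z. indicator (EE TYPE('n) (fst q) (snd q)) z * Zp TYPE('n) f q / ennreal (fst z) \<partial>lebesgue) \<partial>count_space UNIV)"
    using K0 K8_pos[where 'n='n] by (subst nn_integral_cmult[symmetric]) (auto simp: ennreal_mult mult.assoc)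
  also have "(\<integral>\<^sup>+ q. (\<integral>\<^sup>+ z. indicator (EE TYPE('n) (fst q) (snd q)) z * Zp TYPE('n) f q / ennreal (fst z) \<partial>lebesgue) \<partial>count_space UNIV)
     = (\<integral>\<^sup>+ z. (\<integral>\<^sup>+ q. indicator (EE TYPE('n) (fst q) (snd q)) z * Zp TYPE('n) f q / ennreal (fst z) \<partial>count_space UNIV) \<partial>lebesgue)"
  proof (rule nn_integral_count_space_nn_integral[symmetric])
    fix q :: "int \<times> (int^'n)"
    have [measurable]: "EE TYPE('n) (fst q) (snd q) \<in> sets (lebesgue :: (real \<times> (real^'n)) measure)" by (rule EE_sets)
    show "(\<lambda>z. indicator (EE TYPE('n) (fst q) (snd q)) z * Zp TYPE('n) f q / ennreal (fst z)) \<in> borel_measurable lebesgue"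
      by measurable
  qed simp
  also have "\<dots> \<le> (\<integral>\<^sup>+ z. indicator upper_half z * epowr (whitney_sq c0 c1 (kappa (- s) f) z) (p / 2) / ennreal (fst z) \<partial>lebesgue)"
    by (intro nn_integral_mono Fprime[OF fm])
  finally have fin: "?ID \<le> ennreal (NCr TYPE('n)) * (ennreal (K * K8 TYPE('n)) * ?IZ)"
    by (simp add: mult_left_mono)
  have "ennreal (NCr TYPE('n)) * (ennreal (K * K8 TYPE('n)) * ?IZ) = ennreal (CL TYPE('n)) * ?IZ"
    unfolding CL_def K_def[symmetric] using K0 K8_pos[where 'n='n]
    by (subst ennreal_assoc2) (auto simp: NCr_def mult.assoc)
  then show ?thesis using fin by simp
qed

end

theorem proposition2p20:
  fixes p s c0 c1 :: real and k :: int
  assumes "0 < p" and "0 < c0" and "3 / 2 < c1"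
  shows "\<exists>C :: real. C > 0 \<and>
    (\<forall>f :: real \<times> (real^'n) \<Rightarrow> complex^'m. f \<in> borel_measurable lebesgue \<longrightarrow>
        Z_norm p s c0 c1 f \<le> ennreal C * dyadic_norm p s k f \<and>
        dyadic_norm p s k f \<le> ennreal C * Z_norm p s c0 c1 f)"
proof -
  interpret W: WS p s c0 c1 k using assms by unfold_locales auto
  define A where "A = W.CU TYPE('n) + 1"
  define B where "B = W.CL TYPE('n)"
  have A0: "A > 0" unfolding A_def using W.CU_nonneg[where 'n='n] by simp
  have B0: "B > 0" unfolding B_def by (rule W.CL_pos)
  define C where "C = max (A powr (1/p)) (B powr (1/p))"
  have C0: "C > 0" unfolding C_def using A0 by (auto simp: less_max_iff_disj)
  have ip: "1/p > 0" using assms by simp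
  show ?thesis
  proof (intro exI conjI allI impI)
    show "C > 0" by (rule C0)
  next
    fix f :: "real \<times> (real^'n) \<Rightarrow> complex^'m"
    assume fm: "f \<in> borel_measurable lebesgue"
    define IZ where "IZ = (\<integral>\<^sup>+ z. indicator upper_half z * epowr (whitney_sq c0 c1 (kappa (- s) f) z) (p / 2) / ennreal (fst z) \<partial>lebesgue)"
    define ID where "ID = (\<integral>\<^sup>+ q. ennreal (dyadic_len (fst q) ^ CARD('n) * dyadic_len (fst q) powr (- s * p))
                    * epowr (cube_sq k (fst q) (snd q) f) (p / 2) \<partial>(count_space (UNIV :: (int \<times> (int^'n)) set)))"
    have ZN: "Z_norm p s c0 c1 f = epowr IZ (1/p)" unfolding Z_norm_def IZ_def ..
    have DN: "dyadic_norm p s k f = epowr ID (1/p)" unfolding dyadic_norm_def ID_def ..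
    have up: "IZ \<le> ennreal A * ID"
    proof -
      have "IZ \<le> ennreal (W.CU TYPE('n)) * ID" unfolding IZ_def ID_def by (rule W.Z_upper[OF fm])
      also have "\<dots> \<le> ennreal A * ID" unfolding A_def by (intro mult_right_mono ennreal_leI) auto
      finally show ?thesis .
    qed
    have lo: "ID \<le> ennreal B * IZ" unfolding IZ_def ID_def B_def by (rule W.Z_lower[OF fm])
    have "epowr IZ (1/p) \<le> epowr (ennreal A * ID) (1/p)" by (rule epowr_mono[OF up]) (use ip in simp)
    also have "\<dots> = ennreal (A powr (1/p)) * epowr ID (1/p)" by (rule epowr_cmult[OF A0 ip])
    also have "\<dots> \<le> ennreal C * epowr ID (1/p)" unfolding C_def by (intro mult_right_mono ennreal_leI) auto
    finally show "Z_norm p s c0 c1 f \<le> ennreal C * dyadic_norm p s k f" unfolding ZN DN .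
    have "epowr ID (1/p) \<le> epowr (ennreal B * IZ) (1/p)" by (rule epowr_mono[OF lo]) (use ip in simp)
    also have "\<dots> = ennreal (B powr (1/p)) * epowr IZ (1/p)" by (rule epowr_cmult[OF B0 ip])
    also have "\<dots> \<le> ennreal C * epowr IZ (1/p)" unfolding C_def by (intro mult_right_mono ennreal_leI) auto
    finally show "dyadic_norm p s k f \<le> ennreal C * Z_norm p s c0 c1 f" unfolding ZN DN .
  qed
qed


end
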